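(* Let $2<p<N$, let $G=(V,E,w)$ satisfy the standing assumptions and the Sobolev inequality (S), and let $\rho$ be the density as below. Set $\lambda=N(p-2)+p$ and suppose that for some $\nu>0$ (taken sufficiently large) $$\sum_{x\in V}\rho(x)^{N(p-1+\nu)/(\lambda+p\nu)}\,m(x)<\infty.$$ Let $u\ge0$ be a solution of $\rho(x)\partial_tu(x,t)-\Delta_pu(x,t)=0$ in $V\times(0,T)$ for every $T>0$. Then for all $t>0$ $$\|u(t)\|_\infty=\sup_{x\in V}|u(x,t)|\le C\,t^{-1/(p-2)},$$ where $C$ is independent of the initial datum $u(\cdot,0)$.
   Context: Standing setting: $G=(V,E,w)$ is a simple, undirected, infinite, connected graph; $w$ symmetric, $w(x,x)=0$, $w(x,y)>0$ iff $x\sim y$; $m(x)=\sum_{y\sim x}w(x,y)$ is bounded above and $\inf_x m(x)>0$. Fix $x_0\in V$, $d(x)$ the combinatorial distance to $x_0$. $\Delta_p u(x)=\frac{1}{m(x)}\sum_{y\in V}|u(y)-u(x)|^{p-2}(u(y)-u(x))w(x,y)$. The density is $\rho(x)=\rho(d(x))$ with $\rho$ positive, nonincreasing, $\rho\le1$. (S) Sobolev inequality: with $p^*=Np/(N-p)$, there is $C$ such that for every finite $U\subset V$ and every $f:V\to\mathbb R$ vanishing outside $U$, $\big(\sum_{x\in U}|f(x)|^{p^*}m(x)\big)^{1/p^*}\le C\big(\sum_{x,y\in U}|f(y)-f(x)|^pw(x,y)\big)^{1/p}$. A solution is a function $u\in L^\infty(0,T;\ell^r(V))$ for some $r\ge1$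 such that $t\mapsto u(x,t)$ is $C^1$ on $[0,T]$ for every $x$ and the equation holds pointwise. *)

theory Defs
  imports "HOL-Analysis.Analysis"
begin

definition edges :: "('v \<Rightarrow> 'v \<Rightarrow> real) \<Rightarrow> ('v \<times> 'v) set" where
  "edges w = {(x, y). w x y > 0}"

definition weighted_graph :: "('v \<Rightarrow> 'v \<Rightarrow> real) \<Rightarrow> bool" where
  "weighted_graph w \<longleftrightarrow>
     infinite (UNIV :: 'v set) \<and>
     (\<forall>x y. w x y = w y x) \<and> (\<forall>x. w x x = 0) \<and> (\<forall>x y. w x y \<ge> 0) \<and>
     (\<forall>x y. (x, y) \<in> (edges w)\<^sup>*) \<and>
     (\<forall>x. w x summable_on UNIV)"

definition vmeas :: "('v \<Rightarrow> 'v \<Rightarrow> real) \<Rightarrow> 'v \<Rightarrow> real" where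
  "vmeas w x = (\<Sum>\<^sub>\<infinity>y. w x y)"

definition gdist :: "('v \<Rightarrow> 'v \<Rightarrow> real) \<Rightarrow> 'v \<Rightarrow> 'v \<Rightarrow> nat" where
  "gdist w x0 x = (LEAST n. (x0, x) \<in> (edges w) ^^ n)"

definition plap :: "('v \<Rightarrow> 'v \<Rightarrow> real) \<Rightarrow> real \<Rightarrow> ('v \<Rightarrow> real) \<Rightarrow> 'v \<Rightarrow> real" where
  "plap w p f x = (1 / vmeas w x) *
     (\<Sum>\<^sub>\<infinity>y. \<bar>f y - f x\<bar> powr (p - 2) * (f y - f x) * w x y)"

definition sobolev :: "('v \<Rightarrow> 'v \<Rightarrow> real) \<Rightarrow> real \<Rightarrow> real \<Rightarrow> bool" where
  "sobolev w N p \<longleftrightarrow> (\<exists>C. \<forall>(U :: 'v set) (f :: 'v \<Rightarrow> real).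
     finite U \<longrightarrow> (\<forall>x. x \<notin> U \<longrightarrow> f x = 0) \<longrightarrow>
     (\<Sum>x\<in>U. \<bar>f x\<bar> powr (N * p / (N - p)) * vmeas w x) powr (1 / (N * p / (N - p)))
       \<le> C * (\<Sum>\<^sub>\<infinity>(x, y). \<bar>f y - f x\<bar> powr p * w x y) powr (1 / p))"

text \<open>Solution of rho(x) d_t u - Delta_p u = 0 in V x (0,T): u in L^infty(0,T; l^r(V)) for some
  r >= 1 (l^r w.r.t. the measure m), t -> u(x,t) C^1 on [0,T] for every x, equation pointwise.\<close>
definition is_solution ::
  "('v \<Rightarrow> 'v \<Rightarrow> real) \<Rightarrow> real \<Rightarrow> ('v \<Rightarrow> real) \<Rightarrow> ('v \<Rightarrow> real \<Rightarrow> real) \<Rightarrow> real \<Rightarrow> bool" where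
  "is_solution w p rho u T \<longleftrightarrow>
     (\<exists>r \<ge> 1. \<exists>M. \<forall>t \<in> {0..T}.
        (\<lambda>x. \<bar>u x t\<bar> powr r * vmeas w x) summable_on UNIV \<and>
        (\<Sum>\<^sub>\<infinity>x. \<bar>u x t\<bar> powr r * vmeas w x) \<le> M) \<and>
     (\<forall>x. \<exists>u'. continuous_on {0..T} u' \<and>
        (\<forall>t \<in> {0..T}. ((\<lambda>s. u x s) has_real_derivative u' t) (at t within {0..T})) \<and>
        (\<forall>t \<in> {0<..<T}. rho x * u' t - plap w p (\<lambda>y. u y t) x = 0))"

end

theory Submission
  imports Defs
begin
lemma sum_le_infsum:
  fixes f :: "'a \<Rightarrow> real"
  assumes "f summable_on A" "\<And>x. x \<in> A \<Longrightarrow> f x \<ge> 0" "finite F" "F \<subseteq> A"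
  shows "sum f F \<le> infsum f A"
  using infsum_mono2[of f F A] assms by auto

lemma finite_level:
  fixes f :: "'a \<Rightarrow> real"
  assumes "f summable_on UNIV" "\<And>x. f x \<ge> 0" "\<eta> > 0"
  shows "finite {x. f x \<ge> \<eta>}"
proof (rule ccontr)
  assume inf: "infinite {x. f x \<ge> \<eta>}"
  define n where "n = nat (ceiling ((infsum f UNIV + 1) / \<eta>))"
  obtain B where B: "finite B" "card B = n" "B \<subseteq> {x. f x \<ge> \<eta>}"
    using infinite_arbitrarily_large[OF inf] by blast
  have "real n * \<eta> \<le> sum f B"
  proof -
    have "sum (\<lambda>_. \<eta>) B \<le> sum f B" using B by (intro sum_mono) auto
    thus ?thesis using B by simp
  qed
  also have "\<dots> \<le> infsum f UNIV"
    using B assms by (intro sum_le_infsum) auto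
  finally have "real n * \<eta> \<le> infsum f UNIV" .
  moreover have "real n \<ge> (infsum f UNIV + 1) / \<eta>" unfolding n_def by linarith
  hence "real n * \<eta> \<ge> infsum f UNIV + 1" using assms(3) by (simp add: field_simps)
  ultimately show False by linarith
qed

lemma le_infsum:
  fixes f :: "'a \<Rightarrow> real"
  assumes "f summable_on A" "\<And>x. x \<in> A \<Longrightarrow> f x \<ge> 0" "x \<in> A"
  shows "f x \<le> infsum f A"
  using sum_le_infsum[of f A "{x}"] assms by auto

lemma infsum_finite_support:
  fixes f :: "'a \<Rightarrow> real"
  assumes "finite F" "\<And>x. x \<notin> F \<Longrightarrow> f x = 0"
  shows "infsum f UNIV = sum f F"
proof -
  have "infsum f UNIV = infsum f F" by (rule infsum_cong_neutral) (use assms in auto)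
  thus ?thesis using assms by simp
qed

lemma holder_sum:
  fixes a b m :: "'a \<Rightarrow> real"
  assumes F: "finite F" and nn: "\<And>x. x \<in> F \<Longrightarrow> a x \<ge> 0" "\<And>x. x \<in> F \<Longrightarrow> b x \<ge> 0"
    "\<And>x. x \<in> F \<Longrightarrow> m x > 0"
    and PQ: "P > 1" "Q > 1" "1/P + 1/Q = 1"
  shows "(\<Sum>x\<in>F. a x * b x * m x) \<le>
     (\<Sum>x\<in>F. a x powr P * m x) powr (1/P) * (\<Sum>x\<in>F. b x powr Q * m x) powr (1/Q)"
proof -
  define X where "X = (\<Sum>x\<in>F. a x powr P * m x)"
  define Y where "Y = (\<Sum>x\<in>F. b x powr Q * m x)"
  have X0: "X \<ge> 0" unfolding X_def using nn by (intro sum_nonneg mult_nonneg_nonneg) (auto simp: less_imp_le)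
  have Y0: "Y \<ge> 0" unfolding Y_def using nn by (intro sum_nonneg mult_nonneg_nonneg) (auto simp: less_imp_le)
  show ?thesis
  proof (cases "X = 0 \<or> Y = 0")
    case True
    then show ?thesis
    proof
      assume "X = 0"
      hence "\<forall>x\<in>F. a x powr P * m x = 0" unfolding X_def using nn F
        by (subst (asm) sum_nonneg_eq_0_iff) (auto simp: less_imp_le)
      hence "\<forall>x\<in>F. a x = 0" using nn by (metis less_irrefl powr_eq_0_iff mult_eq_0_iff)
      hence "(\<Sum>x\<in>F. a x * b x * m x) = 0" by simp
      thus ?thesis by simp
    next
      assume "Y = 0"
      hence "\<forall>x\<in>F. b x powr Q * m x = 0" unfolding Y_def using nn F
        by (subst (asm) sum_nonneg_eq_0_iff) (auto simp: less_imp_le)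
      hence "\<forall>x\<in>F. b x = 0" using nn by (metis less_irrefl powr_eq_0_iff mult_eq_0_iff)
      hence "(\<Sum>x\<in>F. a x * b x * m x) = 0" by simp
      thus ?thesis by simp
    qed
  next
    case False
    hence Xp: "X > 0" and Yp: "Y > 0" using X0 Y0 by auto
    define \<alpha> where "\<alpha> = X powr (1/P)"
    define \<beta> where "\<beta> = Y powr (1/Q)"
    have ap: "\<alpha> > 0" "\<beta> > 0" unfolding \<alpha>_def \<beta>_def using Xp Yp by auto
    have aP: "\<alpha> powr P = X" unfolding \<alpha>_def using Xp PQ by (simp add: powr_powr)
    have bQ: "\<beta> powr Q = Y" unfolding \<beta>_def using Yp PQ by (simp add: powr_powr)
    have pt: "a x * b x * m x / (\<alpha> * \<beta>) \<le> (a x powr P * m x) / (X * P) + (b x powr Q * m x) / (Y * Q)"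
      if x: "x \<in> F" for x
    proof -
      have "(a x / \<alpha>) * (b x / \<beta>) \<le> (a x / \<alpha>) powr P / P + (b x / \<beta>) powr Q / Q"
        using nn[OF x] ap PQ by (intro Youngs_inequality) auto
      also have "\<dots> = a x powr P / (X * P) + b x powr Q / (Y * Q)"
        using nn[OF x] ap by (simp add: powr_divide aP bQ)
      finally have "(a x / \<alpha>) * (b x / \<beta>) * m x \<le> (a x powr P / (X * P) + b x powr Q / (Y * Q)) * m x"
        using nn(3)[OF x] by (intro mult_right_mono) auto
      thus ?thesis by (simp add: field_simps)
    qed
    have "(\<Sum>x\<in>F. a x * b x * m x) / (\<alpha> * \<beta>) = (\<Sum>x\<in>F. a x * b x * m x / (\<alpha> * \<beta>))"
      by (simp add: sum_divide_distrib)
    also have "\<dots> \<le> (\<Sum>x\<in>F. (a x powr P * m x) / (X * P) + (b x powr Q * m x) / (Y * Q))"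
      by (rule sum_mono) (rule pt)
    also have "\<dots> = X / (X * P) + Y / (Y * Q)"
      by (simp add: sum.distrib X_def Y_def sum_divide_distrib)
    also have "\<dots> = 1" using Xp Yp PQ by simp
    finally have "(\<Sum>x\<in>F. a x * b x * m x) \<le> \<alpha> * \<beta>" using ap by (simp add: field_simps)
    thus ?thesis unfolding \<alpha>_def \<beta>_def X_def Y_def .
  qed
qed

lemma powr_plus1: "0 < (x::real) \<Longrightarrow> x powr (a + 1) = x powr a * x"
  by (simp add: powr_add)

lemma powr_shift1: "0 < (x::real) \<Longrightarrow> x powr b = x powr (b - 1) * x"
  using powr_plus1[of x "b - 1"] by simp

lemma pw_ineq_lt:
  fixes A B k p :: real
  assumes AB: "0 < A" "A < B" and k: "k \<ge> 2" and p: "p > 2"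
  defines "\<gamma> \<equiv> (k + p - 2) / p"
  shows "(k / \<gamma> powr p) * \<bar>B powr \<gamma> - A powr \<gamma>\<bar> powr p \<le>
    (k * B powr (k-1) - k * A powr (k-1)) * (\<bar>B - A\<bar> powr (p-2) * (B - A))"
proof -
  have g1: "\<gamma> \<ge> 1" unfolding \<gamma>_def using k p by (simp add: field_simps)
  have gp: "(\<gamma> - 1) * p = k - 2" unfolding \<gamma>_def using p by (simp add: field_simps)
  have Bp: "B > 0" using AB by simp
  have d1: "B powr (k-1) - A powr (k-1) \<ge> B powr (k-2) * (B - A)"
  proof -
    have "A powr (k-2) \<le> B powr (k-2)" using AB k by (intro powr_mono2) auto
    hence "A powr (k-2) * A \<le> B powr (k-2) * A" using AB by (intro mult_right_mono) auto
    moreover have "B powr (k-1) = B powr (k-2) * B" using powr_shift1[OF Bp, of "k-1"] by simp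
    moreover have "A powr (k-1) = A powr (k-2) * A" using powr_shift1[OF AB(1), of "k-1"] by simp
    ultimately show ?thesis by (simp add: algebra_simps)
  qed
  obtain z where z: "A < z" "z < B" "B powr \<gamma> - A powr \<gamma> = (B - A) * (\<gamma> * z powr (\<gamma> - 1))"
  proof -
    have "\<And>x. A \<le> x \<Longrightarrow> x \<le> B \<Longrightarrow> ((\<lambda>x. x powr \<gamma>) has_real_derivative \<gamma> * x powr (\<gamma> - 1)) (at x)"
      using AB by (auto intro!: derivative_eq_intros)
    from MVT2[OF AB(2) this] show ?thesis using that by blast
  qed
  have m1: "0 \<le> B powr \<gamma> - A powr \<gamma>" using AB g1 by (simp add: powr_mono2)
  have m2: "B powr \<gamma> - A powr \<gamma> \<le> \<gamma> * B powr (\<gamma> - 1) * (B - A)"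
  proof -
    have "z powr (\<gamma> - 1) \<le> B powr (\<gamma> - 1)" using z AB g1 by (intro powr_mono2) auto
    hence "(B - A) * (\<gamma> * z powr (\<gamma> - 1)) \<le> (B - A) * (\<gamma> * B powr (\<gamma> - 1))"
      using AB g1 by (intro mult_left_mono) auto
    thus ?thesis using z by (simp add: algebra_simps)
  qed
  have "\<bar>B powr \<gamma> - A powr \<gamma>\<bar> powr p \<le> (\<gamma> * B powr (\<gamma> - 1) * (B - A)) powr p"
    using m1 m2 p by (simp add: powr_mono2)
  also have "\<dots> = \<gamma> powr p * B powr (k - 2) * (B - A) powr p"
    using g1 Bp AB by (simp add: powr_mult powr_powr gp)
  finally have e1: "\<bar>B powr \<gamma> - A powr \<gamma>\<bar> powr p \<le> \<gamma> powr p * B powr (k - 2) * (B - A) powr p" .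
  have gpp: "\<gamma> powr p > 0" using g1 by simp
  have "(k / \<gamma> powr p) * \<bar>B powr \<gamma> - A powr \<gamma>\<bar> powr p \<le> (k / \<gamma> powr p) * (\<gamma> powr p * B powr (k - 2) * (B - A) powr p)"
    using e1 k gpp by (intro mult_left_mono) auto
  also have "\<dots> = k * B powr (k - 2) * (B - A) powr p"
    using gpp by simp
  also have "\<dots> = k * (B powr (k-2) * (B - A)) * (B - A) powr (p - 1)"
  proof -
    have eq: "(B - A) powr p = (B - A) powr (p - 1) * (B - A)" using powr_shift1[of "B - A" p] AB by simp
    show ?thesis unfolding eq by (simp add: algebra_simps)
  qed
  also have "\<dots> \<le> k * (B powr (k-1) - A powr (k-1)) * (B - A) powr (p - 1)"
    using d1 k AB by (intro mult_right_mono mult_left_mono) auto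
  also have "\<dots> = (k * B powr (k-1) - k * A powr (k-1)) * (\<bar>B - A\<bar> powr (p-2) * (B - A))"
  proof -
    have eq: "(B - A) powr (p - 1) = (B - A) powr (p - 2) * (B - A)" using powr_shift1[of "B - A" "p - 1"] AB by simp
    have ab: "\<bar>B - A\<bar> = B - A" using AB by simp
    show ?thesis unfolding eq ab by (simp add: algebra_simps)
  qed
  finally show ?thesis .
qed

lemma pw_ineq:
  fixes A B k p :: real
  assumes AB: "0 < A" "0 < B" and k: "k \<ge> 2" and p: "p > 2"
  defines "\<gamma> \<equiv> (k + p - 2) / p"
  shows "(k / \<gamma> powr p) * \<bar>B powr \<gamma> - A powr \<gamma>\<bar> powr p \<le>
    (k * B powr (k-1) - k * A powr (k-1)) * (\<bar>B - A\<bar> powr (p-2) * (B - A))"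
proof -
  consider "A < B" | "A = B" | "B < A" by linarith
  thus ?thesis
  proof cases
    case 1 thus ?thesis using pw_ineq_lt[OF AB(1) 1 k p] unfolding \<gamma>_def by simp
  next
    case 2 thus ?thesis using p by simp
  next
    case 3
    have "(k / \<gamma> powr p) * \<bar>A powr \<gamma> - B powr \<gamma>\<bar> powr p \<le>
      (k * A powr (k-1) - k * B powr (k-1)) * (\<bar>A - B\<bar> powr (p-2) * (A - B))"
      using pw_ineq_lt[OF AB(2) 3 k p] unfolding \<gamma>_def by simp
    moreover have "\<bar>A powr \<gamma> - B powr \<gamma>\<bar> = \<bar>B powr \<gamma> - A powr \<gamma>\<bar>" "\<bar>A - B\<bar> = \<bar>B - A\<bar>" by auto
    ultimately show ?thesis by (simp add: algebra_simps)
  qed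
qed

lemma deriv_left_approx:
  fixes f :: "real \<Rightarrow> real"
  assumes "(f has_real_derivative d) (at s)" "\<eta> > 0"
  shows "\<exists>\<delta>>0. \<forall>h. 0 < h \<and> h < \<delta> \<longrightarrow> \<bar>f (s - h) - f s + d * h\<bar> \<le> \<eta> * h"
proof -
  have "((\<lambda>y. (f y - f s) / (y - s)) \<longlongrightarrow> d) (at s)"
    using assms(1) by (simp add: has_field_derivative_iff)
  hence "\<forall>\<^sub>F y in at s. dist ((f y - f s) / (y - s)) d < \<eta>"
    using assms(2) tendstoD by blast
  then obtain \<delta> where \<delta>: "\<delta> > 0" "\<And>y. y \<noteq> s \<Longrightarrow> dist y s < \<delta> \<Longrightarrow> dist ((f y - f s) / (y - s)) d < \<eta>"
    unfolding eventually_at by auto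
  show ?thesis
  proof (intro exI[of _ \<delta>] conjI allI impI)
    fix h :: real assume h: "0 < h \<and> h < \<delta>"
    have "dist ((f (s - h) - f s) / (s - h - s)) d < \<eta>"
      using h by (intro \<delta>(2)) (auto simp: dist_real_def)
    hence "\<bar>(f (s - h) - f s) / (- h) - d\<bar> < \<eta>" by (simp add: dist_real_def)
    hence "\<bar>((f (s - h) - f s) / (- h) - d) * (-h)\<bar> \<le> \<eta> * h" using h
      by (simp add: abs_mult)
    moreover have "((f (s - h) - f s) / (- h) - d) * (-h) = f (s - h) - f s + d * h"
      using h by (simp add: field_simps)
    ultimately show "\<bar>f (s - h) - f s + d * h\<bar> \<le> \<eta> * h" by simp
  qed (use \<delta> in auto)
qed

lemma mono_lemma:
  fixes E :: "real \<Rightarrow> real"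
  assumes ab: "a < b" and cont: "continuous_on {a..b} E"
    and H: "\<And>t. t \<in> {a<..b} \<Longrightarrow> \<exists>\<delta>>0. \<forall>h. 0 < h \<and> h < \<delta> \<longrightarrow> E (t - h) > E t + K * h"
  shows "E b \<le> E a - K * (b - a)"
proof (rule ccontr)
  assume neg: "\<not> ?thesis"
  define G where "G t = E t + K * (t - a)" for t
  have Gab: "G a < G b" using neg unfolding G_def by (simp add: algebra_simps)
  have contG: "continuous_on {a..b} G" unfolding G_def by (intro continuous_intros cont)
  define S where "S = {t \<in> {a..b}. (\<lambda>_. G b) t \<le> G t}"
  have clS: "closed S" unfolding S_def by (intro continuous_on_closed_Collect_le continuous_intros contG)
  have bS: "b \<in> S" unfolding S_def using ab by auto
  have bddS: "bdd_below S" unfolding S_def by (rule bdd_belowI[of _ a]) auto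
  define s where "s = Inf S"
  have sS: "s \<in> S" unfolding s_def using closed_contains_Inf[OF _ bddS clS] bS by auto
  hence s1: "a \<le> s" "s \<le> b" "G s \<ge> G b" unfolding S_def by auto
  have "s \<noteq> a" using s1 Gab by auto
  hence sa: "a < s" using s1 by auto
  obtain \<delta> where \<delta>: "\<delta> > 0" "\<And>h. 0 < h \<and> h < \<delta> \<Longrightarrow> E (s - h) > E s + K * h"
    using H[of s] sa s1 by auto
  define h where "h = min (\<delta>/2) ((s - a)/2)"
  have h: "0 < h" "h < \<delta>" "h \<le> (s - a)/2" unfolding h_def using \<delta> sa by (auto simp: min_def)
  have "G (s - h) > G s" using \<delta>(2)[of h] h unfolding G_def by (simp add: algebra_simps)
  hence "s - h \<in> S" using s1 h unfolding S_def by auto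
  hence "s \<le> s - h" unfolding s_def by (rule cInf_lower[OF _ bddS])
  thus False using h by simp
qed

lemma ode_lemma:
  fixes E :: "real \<Rightarrow> real" and b c \<alpha> :: real
  assumes b: "b > 0" and c: "c > 0" and \<alpha>: "\<alpha> > 1"
    and cont: "continuous_on {0..b} E" and nn: "\<And>t. t \<in> {0..b} \<Longrightarrow> E t \<ge> 0"
    and H: "\<And>t. t \<in> {0<..b} \<Longrightarrow> E t > 0 \<Longrightarrow>
       \<exists>\<delta>>0. \<forall>h. 0 < h \<and> h < \<delta> \<longrightarrow> E (t - h) \<ge> E t + c * E t powr \<alpha> * h"
  shows "E b \<le> (c * (\<alpha> - 1) * b / 2) powr (- 1 / (\<alpha> - 1))"
proof (rule ccontr)
  define \<kappa> where "\<kappa> = c * (\<alpha> - 1) / 2"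
  define \<beta> where "\<beta> = 1 / (\<alpha> - 1)"
  define \<Phi> where "\<Phi> t = (\<kappa> * t) powr (- \<beta>)" for t
  have \<kappa>: "\<kappa> > 0" unfolding \<kappa>_def using c \<alpha> by auto
  have \<beta>: "\<beta> > 0" unfolding \<beta>_def using \<alpha> by auto
  have \<beta>\<alpha>: "\<beta> * (\<alpha> - 1) = 1" unfolding \<beta>_def using \<alpha> by simp
  assume "\<not> E b \<le> (c * (\<alpha> - 1) * b / 2) powr (- 1 / (\<alpha> - 1))"
  hence Eb: "E b > \<Phi> b" unfolding \<Phi>_def \<kappa>_def \<beta>_def by (simp add: field_simps)
  obtain M where M: "\<And>t. t \<in> {0..b} \<Longrightarrow> E t \<le> M"
    using continuous_attains_sup[OF compact_Icc _ cont] b by fastforce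
  have M0: "M \<ge> 0" using M[of b] nn[of b] b by auto
  define t1 where "t1 = min b ((M + 1) powr (- (\<alpha> - 1)) / \<kappa>)"
  have t1: "t1 > 0" "t1 \<le> b" unfolding t1_def using b \<kappa> M0 by auto
  have Phi_big: "\<Phi> t \<ge> M + 1" if "0 < t" "t \<le> t1" for t
  proof -
    have "\<kappa> * t \<le> (M + 1) powr (- (\<alpha> - 1))" using that \<kappa> unfolding t1_def by (simp add: field_simps)
    hence "((M + 1) powr (- (\<alpha> - 1))) powr (- \<beta>) \<le> (\<kappa> * t) powr (- \<beta>)"
      using \<kappa> that \<beta> by (intro powr_mono2') auto
    moreover have "((M + 1) powr (- (\<alpha> - 1))) powr (- \<beta>) = M + 1"
      using M0 \<beta>\<alpha> by (simp add: powr_powr algebra_simps)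
    ultimately show ?thesis unfolding \<Phi>_def by simp
  qed
  have contPhi: "continuous_on {t1..b} \<Phi>" unfolding \<Phi>_def using t1 \<kappa>
    by (intro continuous_intros) auto
  have contE1: "continuous_on {t1..b} E" using t1 by (intro continuous_on_subset[OF cont]) auto
  define S where "S = {t \<in> {t1..b}. \<Phi> t \<le> E t}"
  have clS: "closed S" unfolding S_def by (intro continuous_on_closed_Collect_le contPhi contE1) auto
  have bS: "b \<in> S" unfolding S_def using t1 Eb by auto
  have bddS: "bdd_below S" unfolding S_def by (rule bdd_belowI[of _ t1]) auto
  define s where "s = Inf S"
  have sS: "s \<in> S" unfolding s_def using closed_contains_Inf[OF _ bddS clS] bS by auto
  hence s1: "t1 \<le> s" "s \<le> b" "\<Phi> s \<le> E s" unfolding S_def by auto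
  have below: "E t < \<Phi> t" if "0 < t" "t < s" for t
  proof (cases "t \<le> t1")
    case True
    thus ?thesis using Phi_big[OF that(1) True] M[of t] that t1 s1 by auto
  next
    case False
    have "t \<notin> S"
    proof
      assume "t \<in> S" hence "s \<le> t" unfolding s_def by (rule cInf_lower[OF _ bddS])
      thus False using that by simp
    qed
    thus ?thesis using False that s1 unfolding S_def by auto
  qed
  have sp: "s > 0" using s1 t1 by auto
  have Phis: "\<Phi> s > 0" unfolding \<Phi>_def using sp \<kappa> by simp
  have Es: "E s > 0" using Phis s1 by simp
  obtain \<delta>1 where \<delta>1: "\<delta>1 > 0" "\<And>h. 0 < h \<and> h < \<delta>1 \<Longrightarrow> E (s - h) \<ge> E s + c * E s powr \<alpha> * h"
    using H[of s] sp s1 Es by auto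
  define d where "d = - \<beta> * \<kappa> * (\<kappa> * s) powr (- \<beta> - 1)"
  have dPhi: "(\<Phi> has_real_derivative d) (at s)"
    unfolding \<Phi>_def d_def using sp \<kappa>
    by (auto intro!: derivative_eq_intros simp: algebra_simps)
  have dval: "d = - (c / 2) * \<Phi> s powr \<alpha>"
  proof -
    have "\<Phi> s powr \<alpha> = (\<kappa> * s) powr (- \<beta> * \<alpha>)" unfolding \<Phi>_def using sp \<kappa> by (simp add: powr_powr)
    also have "- \<beta> * \<alpha> = - \<beta> - 1" using \<beta>\<alpha> by (simp add: algebra_simps)
    finally have "\<Phi> s powr \<alpha> = (\<kappa> * s) powr (- \<beta> - 1)" .
    moreover have "\<beta> * \<kappa> = c / 2" unfolding \<beta>_def \<kappa>_def using \<alpha> by simp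
    ultimately show ?thesis unfolding d_def by simp
  qed
  have eta: "(c / 2) * \<Phi> s powr \<alpha> / 2 > 0" using c Phis by simp
  obtain \<delta>2 where \<delta>2: "\<delta>2 > 0" "\<And>h. 0 < h \<and> h < \<delta>2 \<Longrightarrow> \<bar>\<Phi> (s - h) - \<Phi> s + d * h\<bar> \<le> (c / 2) * \<Phi> s powr \<alpha> / 2 * h"
    using deriv_left_approx[OF dPhi eta] by blast
  define h where "h = min (min \<delta>1 \<delta>2) s / 2"
  have h: "0 < h" "h < \<delta>1" "h < \<delta>2" "h < s" unfolding h_def using \<delta>1 \<delta>2 sp by auto
  have "\<Phi> (s - h) \<le> \<Phi> s + (3/4) * c * \<Phi> s powr \<alpha> * h"
  proof -
    define q where "q = c * \<Phi> s powr \<alpha> * h"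
    have A: "\<Phi> (s - h) - \<Phi> s + d * h \<le> (c / 2) * \<Phi> s powr \<alpha> / 2 * h"
      using \<delta>2(2)[of h] h abs_le_D1 by blast
    have B: "d * h = - q / 2" unfolding q_def dval by simp
    have C: "(c / 2) * \<Phi> s powr \<alpha> / 2 * h = q / 4" unfolding q_def by simp
    have D: "(3/4) * c * \<Phi> s powr \<alpha> * h = 3 * q / 4" unfolding q_def by simp
    have E: "\<Phi> (s - h) \<le> \<Phi> s - d * h + (c / 2) * \<Phi> s powr \<alpha> / 2 * h" using A by simp
    show ?thesis unfolding D using E unfolding B C by simp
  qed
  also have "\<dots> < \<Phi> s + c * \<Phi> s powr \<alpha> * h" using h c Phis by simp
  also have "\<dots> \<le> E s + c * E s powr \<alpha> * h"
  proof -
    have "\<Phi> s powr \<alpha> \<le> E s powr \<alpha>" using s1 Phis \<alpha> by (intro powr_mono2) auto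
    thus ?thesis using s1 c h by (simp add: mult_left_mono mult_right_mono add_mono)
  qed
  also have "\<dots> \<le> E (s - h)" using \<delta>1(2)[of h] h by simp
  finally have "\<Phi> (s - h) < E (s - h)" .
  moreover have "E (s - h) < \<Phi> (s - h)" using below[of "s - h"] h by simp
  ultimately show False by simp
qed

lemma summable_bound:
  fixes f g :: "'a \<Rightarrow> real"
  assumes "g summable_on UNIV" "\<And>x. g x \<ge> 0" "\<And>x. \<bar>f x\<bar> \<le> C * g x"
  shows "f summable_on A"
proof -
  have "(\<lambda>x. C * g x) summable_on UNIV" using assms(1) by (rule summable_on_cmult_right)
  hence "(\<lambda>x. norm (C * g x)) summable_on UNIV" by (rule summable_on_iff_abs_summable_on_real[THEN iffD1])
  hence "(\<lambda>x. norm (f x)) summable_on UNIV"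
    by (rule Infinite_Sum.abs_summable_on_comparison_test) (metis abs_ge_self order_trans real_norm_def assms(3))
  hence "f summable_on UNIV" by (rule summable_on_iff_abs_summable_on_real[THEN iffD2])
  thus ?thesis using summable_on_subset[OF _ subset_UNIV] by blast
qed

lemma pair_bound:
  fixes h :: "'a \<Rightarrow> 'a \<Rightarrow> real"
  assumes F: "finite F" and nn: "\<And>x y. h x y \<ge> 0" and sym: "\<And>x y. h x y = h y x"
    and z: "\<And>x y. x \<notin> F \<Longrightarrow> y \<notin> F \<Longrightarrow> h x y = 0"
    and sm: "\<And>x. h x summable_on UNIV"
  shows "(\<lambda>(x,y). h x y) summable_on UNIV"
    "(\<Sum>\<^sub>\<infinity>(x,y). h x y) \<le> 2 * (\<Sum>x\<in>F. \<Sum>\<^sub>\<infinity>y. h x y)"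
proof -
  define R where "R = (\<Sum>x\<in>F. \<Sum>\<^sub>\<infinity>y. h x y)"
  define h1 where "h1 = (\<lambda>(x,y). if x \<in> F then h x y else 0)"
  have h1b: "sum h1 Q \<le> R" if Q: "finite Q" for Q
  proof -
    have "sum h1 Q = sum h1 (Q \<inter> (F \<times> UNIV))"
      unfolding h1_def by (rule sum.mono_neutral_right) (use Q in \<open>auto split: if_splits\<close>)
    also have "\<dots> \<le> sum h1 (F \<times> snd ` Q)"
      unfolding h1_def by (rule sum_mono2) (use F Q nn in \<open>force simp: image_iff\<close>)+
    also have "\<dots> = (\<Sum>x\<in>F. \<Sum>y\<in>snd ` Q. h x y)"
      unfolding h1_def by (subst sum.cartesian_product[symmetric]) (auto intro!: sum.cong)
    also have "\<dots> \<le> R" unfolding R_def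
      by (intro sum_mono sum_le_infsum sm) (use Q nn in auto)
    finally show ?thesis .
  qed
  have pb: "sum (\<lambda>(x,y). h x y) Q \<le> 2 * R" if Q: "finite Q" for Q
  proof -
    have "sum (\<lambda>(x,y). h x y) Q \<le> sum (\<lambda>q. h1 q + h1 (prod.swap q)) Q"
    proof (rule sum_mono)
      fix q assume "q \<in> Q"
      obtain x y where q: "q = (x, y)" by fastforce
      show "(case q of (x, y) \<Rightarrow> h x y) \<le> h1 q + h1 (prod.swap q)"
        unfolding q h1_def using nn[of x y] nn[of y x] z[of x y] sym[of x y] by auto
    qed
    also have "\<dots> = sum h1 Q + sum (h1 \<circ> prod.swap) Q" by (simp add: sum.distrib o_def)
    also have "sum (h1 \<circ> prod.swap) Q = sum h1 (prod.swap ` Q)"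
      by (rule sum.reindex[symmetric]) (auto simp: inj_on_def prod.swap_def)
    also have "sum h1 Q + sum h1 (prod.swap ` Q) \<le> R + R" using Q by (intro add_mono h1b) auto
    finally show ?thesis by simp
  qed
  show s: "(\<lambda>(x,y). h x y) summable_on UNIV"
    by (rule nonneg_bdd_above_summable_on) (use nn pb in \<open>auto intro!: bdd_aboveI[of _ "2*R"]\<close>)
  show "(\<Sum>\<^sub>\<infinity>(x,y). h x y) \<le> 2 * (\<Sum>x\<in>F. \<Sum>\<^sub>\<infinity>y. h x y)"
    using infsum_le_finite_sums[OF s, of "2*R"] pb unfolding R_def by auto
qed

lemma abs_phi: "p > 2 \<Longrightarrow> \<bar>\<bar>z\<bar> powr (p-2) * (z::real)\<bar> = \<bar>z\<bar> powr (p-1)"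
proof (cases "z = 0")
  case False
  assume p: "p > 2"
  have "\<bar>z\<bar> powr (p-1) = \<bar>z\<bar> powr (p-2) * \<bar>z\<bar>" using powr_shift1[of "\<bar>z\<bar>" "p-1"] False by simp
  thus ?thesis by (simp add: abs_mult)
qed simp

lemma green:
  fixes w :: "'v \<Rightarrow> 'v \<Rightarrow> real" and u :: "'v \<Rightarrow> real" and K \<epsilon> k p :: real
  assumes wsym: "\<And>x y. w x y = w y x" and wnn: "\<And>x y. w x y \<ge> 0"
    and wsum: "\<And>x. w x summable_on UNIV"
    and u0: "\<And>x. 0 \<le> u x" and uK: "\<And>x. u x \<le> K" and \<epsilon>: "\<epsilon> > 0"
    and F: "finite {x. u x > \<epsilon>}" and k: "k \<ge> 2" and p: "p > 2"
  defines "v \<equiv> \<lambda>x. max (u x - \<epsilon>) 0" and "\<gamma> \<equiv> (k + p - 2) / p"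
  shows "(\<Sum>x\<in>{x. u x > \<epsilon>}. k * v x powr (k-1) *
            (\<Sum>\<^sub>\<infinity>y. \<bar>u y - u x\<bar> powr (p-2) * (u y - u x) * w x y))
     \<le> - (k / \<gamma> powr p / 4) * (\<Sum>\<^sub>\<infinity>(x,y). \<bar>v y powr \<gamma> - v x powr \<gamma>\<bar> powr p * w x y)"
proof -
  define Fs where "Fs = {x. u x > \<epsilon>}"
  define g where "g x = k * v x powr (k-1)" for x
  define \<psi> where "\<psi> x y = \<bar>u y - u x\<bar> powr (p-2) * (u y - u x) * w x y" for x y
  define fv where "fv x = v x powr \<gamma>" for x
  define h where "h x y = \<bar>fv y - fv x\<bar> powr p * w x y" for x y
  define c0 where "c0 = k / \<gamma> powr p"
  have g1: "\<gamma> \<ge> 1" unfolding \<gamma>_def using k p by (simp add: field_simps)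
  have K0: "K \<ge> 0" using u0 uK by (meson order_trans)
  have v0: "v x \<ge> 0" for x unfolding v_def by simp
  have vK: "v x \<le> K" for x unfolding v_def using uK[of x] \<epsilon> K0 by simp
  have vF: "x \<in> Fs \<longleftrightarrow> v x > 0" for x unfolding v_def Fs_def by (auto simp: max_def)
  have vnF: "x \<notin> Fs \<Longrightarrow> v x = 0" for x unfolding v_def Fs_def by simp
  have fv0: "fv x \<ge> 0" for x unfolding fv_def by simp
  have fvK: "fv x \<le> K powr \<gamma>" for x unfolding fv_def using v0[of x] vK[of x] g1 by (intro powr_mono2) auto
  have fvnF: "x \<notin> Fs \<Longrightarrow> fv x = 0" for x unfolding fv_def using vnF by simp
  have psib: "\<bar>\<psi> x y\<bar> \<le> K powr (p-1) * w x y" for x y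
  proof -
    have d: "\<bar>u y - u x\<bar> \<le> K" using u0[of x] u0[of y] uK[of x] uK[of y] by linarith
    have "\<bar>\<psi> x y\<bar> = \<bar>u y - u x\<bar> powr (p-1) * w x y"
      unfolding \<psi>_def using abs_phi[OF p, of "u y - u x"] wnn[of x y] by (simp add: abs_mult)
    also have "\<dots> \<le> K powr (p-1) * w x y" using d p wnn[of x y] by (intro mult_right_mono powr_mono2) auto
    finally show ?thesis .
  qed
  have h0: "h x y \<ge> 0" for x y unfolding h_def using wnn[of x y] by simp
  have hb: "\<bar>h x y\<bar> \<le> (K powr \<gamma>) powr p * w x y" for x y
  proof -
    have d: "\<bar>fv y - fv x\<bar> \<le> K powr \<gamma>" using fv0[of x] fv0[of y] fvK[of x] fvK[of y] by linarith
    have "\<bar>h x y\<bar> = h x y" using h0 by simp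
    also have "\<dots> \<le> (K powr \<gamma>) powr p * w x y" unfolding h_def
      using d p wnn[of x y] by (intro mult_right_mono powr_mono2) auto
    finally show ?thesis .
  qed
  have hsym: "h x y = h y x" for x y unfolding h_def using wsym[of x y] by (simp add: abs_minus_commute)
  have psiasym: "\<psi> y x = - \<psi> x y" for x y unfolding \<psi>_def using wsym[of x y]
    by (simp add: abs_minus_commute algebra_simps)
  have psisum: "\<psi> x summable_on A" for x A
    by (rule summable_bound[OF wsum wnn psib])
  have hsum: "h x summable_on A" for x A
    by (rule summable_bound[OF wsum wnn hb])
  have splitF: "infsum f UNIV = sum f Fs + infsum f (-Fs)" if "\<And>A. f summable_on A" for f :: "'v \<Rightarrow> real"
  proof -
    have "infsum f (Fs \<union> -Fs) = infsum f Fs + infsum f (-Fs)"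
      by (rule infsum_Un_disjoint) (use that in auto)
    moreover have "Fs \<union> -Fs = UNIV" by auto
    ultimately show ?thesis using F Fs_def by simp
  qed
  have FF: "finite Fs" using F unfolding Fs_def .
  define S1 where "S1 = (\<Sum>x\<in>Fs. \<Sum>y\<in>Fs. g x * \<psi> x y)"
  define H1 where "H1 = (\<Sum>x\<in>Fs. \<Sum>y\<in>Fs. h x y)"
  have pw1: "c0 * h x y \<le> (g y - g x) * \<psi> x y" if "x \<in> Fs" "y \<in> Fs" for x y
  proof -
    have A: "v x > 0" "v y > 0" using that vF by auto
    have uv: "u y - u x = v y - v x" using A unfolding v_def by (auto split: if_splits simp: max_def)
    have "(k / \<gamma> powr p) * \<bar>v y powr \<gamma> - v x powr \<gamma>\<bar> powr p \<le>
      (k * v y powr (k-1) - k * v x powr (k-1)) * (\<bar>v y - v x\<bar> powr (p-2) * (v y - v x))"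
      using pw_ineq[OF A(1) A(2) k p] unfolding \<gamma>_def by simp
    hence "(k / \<gamma> powr p) * \<bar>v y powr \<gamma> - v x powr \<gamma>\<bar> powr p * w x y \<le>
      (k * v y powr (k-1) - k * v x powr (k-1)) * (\<bar>v y - v x\<bar> powr (p-2) * (v y - v x)) * w x y"
      using wnn[of x y] by (rule mult_right_mono)
    thus ?thesis unfolding c0_def h_def g_def \<psi>_def fv_def uv by (simp add: algebra_simps)
  qed
  have S1eq: "S1 = - (\<Sum>x\<in>Fs. \<Sum>y\<in>Fs. g y * \<psi> x y)"
  proof -
    have "S1 = (\<Sum>y\<in>Fs. \<Sum>x\<in>Fs. g x * \<psi> x y)" unfolding S1_def by (rule sum.swap)
    also have "\<dots> = (\<Sum>x\<in>Fs. \<Sum>y\<in>Fs. - (g y * \<psi> x y))"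
    proof (intro sum.cong refl)
      fix x y show "g y * \<psi> y x = - (g y * \<psi> x y)" by (subst psiasym) simp
    qed
    also have "\<dots> = - (\<Sum>x\<in>Fs. \<Sum>y\<in>Fs. g y * \<psi> x y)"
      by (simp add: sum_negf)
    finally show ?thesis .
  qed
  have "2 * S1 = (\<Sum>x\<in>Fs. \<Sum>y\<in>Fs. g x * \<psi> x y) - (\<Sum>x\<in>Fs. \<Sum>y\<in>Fs. g y * \<psi> x y)"
    using S1eq unfolding S1_def by simp
  also have "\<dots> = - (\<Sum>x\<in>Fs. \<Sum>y\<in>Fs. (g y - g x) * \<psi> x y)"
    by (simp add: sum_subtractf[symmetric] sum_negf[symmetric] algebra_simps)
  also have "\<dots> \<le> - (\<Sum>x\<in>Fs. \<Sum>y\<in>Fs. c0 * h x y)"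
  proof -
    have "(\<Sum>x\<in>Fs. \<Sum>y\<in>Fs. c0 * h x y) \<le> (\<Sum>x\<in>Fs. \<Sum>y\<in>Fs. (g y - g x) * \<psi> x y)"
      by (intro sum_mono pw1)
    thus ?thesis by linarith
  qed
  also have "\<dots> = - c0 * H1" unfolding H1_def by (simp add: sum_distrib_left sum_negf)
  finally have T1: "S1 \<le> - (c0 / 2) * H1" by simp
  define H2 where "H2 = (\<Sum>x\<in>Fs. \<Sum>\<^sub>\<infinity>y\<in>-Fs. h x y)"
  have H2nn: "H2 \<ge> 0" unfolding H2_def using h0 by (intro sum_nonneg infsum_nonneg) auto
  have H1nn: "H1 \<ge> 0" unfolding H1_def using h0 by (intro sum_nonneg) auto
  have pw2: "g x * \<psi> x y \<le> - k * h x y" if "x \<in> Fs" "y \<notin> Fs" for x y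
  proof -
    have vx: "v x > 0" using that vF by auto
    have vy: "v y = 0" using that vnF by auto
    have uy: "u y \<le> \<epsilon>" using that unfolding Fs_def by simp
    have vxe: "v x = u x - \<epsilon>" using vx unfolding v_def by (simp add: max_def split: if_splits)
    define d where "d = u x - u y"
    have dv: "d \<ge> v x" unfolding d_def using vxe uy by simp
    have hxy: "h x y = v x powr (k - 1) * v x powr (p - 1) * w x y"
    proof -
      have "h x y = (v x powr \<gamma>) powr p * w x y" unfolding h_def fv_def vy using vx by simp
      also have "(v x powr \<gamma>) powr p = v x powr (k - 1) * v x powr (p - 1)"
        using vx p unfolding \<gamma>_def by (simp add: powr_powr powr_add[symmetric])
      finally show ?thesis .
    qed
    have psixy: "\<psi> x y = - (d powr (p - 1)) * w x y"
    proof -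
      have "\<bar>u y - u x\<bar> = d" "u y - u x = - d" using dv vx unfolding d_def by auto
      hence "\<psi> x y = - (d powr (p - 2) * d) * w x y" unfolding \<psi>_def by simp
      also have "d powr (p - 2) * d = d powr (p - 1)" using powr_shift1[of d "p - 1"] dv vx by simp
      finally show ?thesis .
    qed
    have "v x powr (p - 1) \<le> d powr (p - 1)" using dv vx p by (intro powr_mono2) auto
    hence "k * v x powr (k-1) * (v x powr (p - 1) * w x y) \<le> k * v x powr (k-1) * (d powr (p - 1) * w x y)"
      using k wnn[of x y] by (intro mult_left_mono mult_right_mono) auto
    thus ?thesis unfolding g_def psixy hxy by (simp add: algebra_simps)
  qed
  have T2: "(\<Sum>x\<in>Fs. g x * (\<Sum>\<^sub>\<infinity>y\<in>-Fs. \<psi> x y)) \<le> - k * H2"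
  proof -
    have "(\<Sum>x\<in>Fs. g x * (\<Sum>\<^sub>\<infinity>y\<in>-Fs. \<psi> x y)) = (\<Sum>x\<in>Fs. \<Sum>\<^sub>\<infinity>y\<in>-Fs. g x * \<psi> x y)"
      by (intro sum.cong refl infsum_cmult_right[symmetric] psisum)
    also have "\<dots> \<le> (\<Sum>x\<in>Fs. \<Sum>\<^sub>\<infinity>y\<in>-Fs. - k * h x y)"
      by (intro sum_mono infsum_mono summable_on_cmult_right psisum hsum pw2) auto
    also have "\<dots> = (\<Sum>x\<in>Fs. - k * (\<Sum>\<^sub>\<infinity>y\<in>-Fs. h x y))"
      by (intro sum.cong refl infsum_cmult_right hsum)
    also have "\<dots> = - k * H2" unfolding H2_def by (simp only: sum_distrib_left)
    finally show ?thesis .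
  qed
  have PB: "(\<Sum>\<^sub>\<infinity>(x,y). h x y) \<le> 2 * (\<Sum>x\<in>Fs. \<Sum>\<^sub>\<infinity>y. h x y)"
    by (rule pair_bound(2)[OF FF h0 hsym _ hsum]) (simp add: h_def fvnF)
  have "(\<Sum>x\<in>Fs. \<Sum>\<^sub>\<infinity>y. h x y) = H1 + H2"
    unfolding H1_def H2_def by (simp add: splitF[OF hsum] sum.distrib)
  hence P: "(\<Sum>\<^sub>\<infinity>(x,y). h x y) \<le> 2 * (H1 + H2)" using PB by simp
  have LHS: "(\<Sum>x\<in>Fs. g x * (\<Sum>\<^sub>\<infinity>y. \<psi> x y)) = S1 + (\<Sum>x\<in>Fs. g x * (\<Sum>\<^sub>\<infinity>y\<in>-Fs. \<psi> x y))"
    unfolding S1_def by (simp add: splitF[OF psisum] distrib_left sum.distrib sum_distrib_left)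
  have c0: "0 \<le> c0" "c0 \<le> k"
  proof -
    have "\<gamma> powr p \<ge> 1" using g1 p by (simp add: ge_one_powr_ge_zero)
    have gp: "\<gamma> powr p > 0" using g1 by simp
    show "0 \<le> c0" unfolding c0_def using k gp by simp
    have "k / \<gamma> powr p \<le> k / 1" using k gp \<open>\<gamma> powr p \<ge> 1\<close> by (intro divide_left_mono) auto
    thus "c0 \<le> k" unfolding c0_def by simp
  qed
  have "(\<Sum>x\<in>Fs. g x * (\<Sum>\<^sub>\<infinity>y. \<psi> x y)) \<le> - (c0 / 2) * H1 - k * H2"
    using LHS T1 T2 by simp
  also have "\<dots> \<le> - (c0 / 4) * (2 * (H1 + H2))"
    using c0 H2nn H1nn mult_left_mono[of c0 "k*2" H2] by (simp add: algebra_simps)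
  also have "\<dots> \<le> - (c0 / 4) * (\<Sum>\<^sub>\<infinity>(x,y). h x y)"
    using P c0 by (simp add: mult_left_mono)
  finally show ?thesis unfolding Fs_def g_def \<psi>_def c0_def h_def fv_def by simp
qed

locale sol =
  fixes w :: "'v \<Rightarrow> 'v \<Rightarrow> real" and rho :: "'v \<Rightarrow> real" and u :: "'v \<Rightarrow> real \<Rightarrow> real"
    and U' :: "'v \<Rightarrow> real \<Rightarrow> real" and p T r M k cm :: real
  assumes wsym: "\<And>x y. w x y = w y x" and wnn: "\<And>x y. w x y \<ge> 0"
    and wsum: "\<And>x. w x summable_on UNIV"
    and mlow: "\<And>x. vmeas w x \<ge> cm" and cm: "cm > 0"
    and rho0: "\<And>x. rho x > 0" and rho1: "\<And>x. rho x \<le> 1"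
    and rhotail: "\<And>\<delta>. \<delta> > 0 \<Longrightarrow> finite {x. rho x \<ge> \<delta>}"
    and T: "T > 0" and u0: "\<And>x t. t \<ge> 0 \<Longrightarrow> u x t \<ge> 0"
    and r: "r \<ge> 1"
    and lr: "\<And>t. t \<in> {0..T} \<Longrightarrow> (\<lambda>x. \<bar>u x t\<bar> powr r * vmeas w x) summable_on UNIV"
    and lrM: "\<And>t. t \<in> {0..T} \<Longrightarrow> (\<Sum>\<^sub>\<infinity>x. \<bar>u x t\<bar> powr r * vmeas w x) \<le> M"
    and der: "\<And>x t. t \<in> {0..T} \<Longrightarrow> ((\<lambda>s. u x s) has_real_derivative U' x t) (at t within {0..T})"
    and eq: "\<And>x t. t \<in> {0<..<T} \<Longrightarrow> rho x * U' x t - plap w p (\<lambda>y. u y t) x = 0"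
    and p: "p > 2" and k: "k \<ge> 2"
begin

definition Kb where "Kb = (M / cm) powr (1 / r)"
definition En where "En L t = (\<Sum>x\<in>{x. u x t > L}. rho x * vmeas w x * max (u x t - L) 0 powr k)"
definition gam where "gam = (k + p - 2) / p"
definition Dv where "Dv L t = (\<Sum>x\<in>{x. u x t > L}. k * max (u x t - L) 0 powr (k-1) *
            (\<Sum>\<^sub>\<infinity>y. \<bar>u y t - u x t\<bar> powr (p-2) * (u y t - u x t) * w x y))"
definition Pv where "Pv L t = (\<Sum>\<^sub>\<infinity>(x,y). \<bar>max (u y t - L) 0 powr gam - max (u x t - L) 0 powr gam\<bar> powr p * w x y)"

lemma mpos: "vmeas w x > 0" using mlow[of x] cm by simp

lemma M0: "M \<ge> 0"
proof -
  have "0 \<le> (\<Sum>\<^sub>\<infinity>x. \<bar>u x 0\<bar> powr r * vmeas w x)" by (intro infsum_nonneg) (simp add: less_imp_le[OF mpos])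
  thus ?thesis using lrM[of 0] T by simp
qed

lemma Kb0: "Kb \<ge> 0" unfolding Kb_def by simp

lemma ubound: assumes t: "t \<in> {0..T}" shows "u x t \<le> Kb"
proof -
  have u0t: "u x t \<ge> 0" using u0 t by simp
  have "\<bar>u x t\<bar> powr r * vmeas w x \<le> (\<Sum>\<^sub>\<infinity>x. \<bar>u x t\<bar> powr r * vmeas w x)"
    by (rule le_infsum[OF lr[OF t]]) (auto simp: less_imp_le[OF mpos])
  also have "\<dots> \<le> M" by (rule lrM[OF t])
  finally have a: "\<bar>u x t\<bar> powr r * vmeas w x \<le> M" .
  have "\<bar>u x t\<bar> powr r * cm \<le> \<bar>u x t\<bar> powr r * vmeas w x" using mlow[of x] by (intro mult_left_mono) auto
  hence "u x t powr r \<le> M / cm" using a cm u0t by (simp add: field_simps)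
  hence "(u x t powr r) powr (1/r) \<le> (M / cm) powr (1/r)" using r u0t by (intro powr_mono2) auto
  thus ?thesis unfolding Kb_def using r u0t by (simp add: powr_powr)
qed

lemma level_finite: assumes t: "t \<in> {0..T}" and L: "L > 0" shows "finite {x. u x t > L}"
proof -
  have "finite {x. \<bar>u x t\<bar> powr r * vmeas w x \<ge> L powr r * cm}"
    by (rule finite_level[OF lr[OF t]]) (use L cm in \<open>auto intro!: mult_nonneg_nonneg less_imp_le[OF mpos]\<close>)
  moreover have "{x. u x t > L} \<subseteq> {x. \<bar>u x t\<bar> powr r * vmeas w x \<ge> L powr r * cm}"
  proof safe
    fix x assume "u x t > L"
    hence "L powr r \<le> \<bar>u x t\<bar> powr r" using L r by (intro powr_mono2) auto
    thus "L powr r * cm \<le> \<bar>u x t\<bar> powr r * vmeas w x" using mlow[of x] cm L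
      by (intro mult_mono) auto
  qed
  ultimately show ?thesis by (rule finite_subset[rotated])
qed

lemma En_nonneg: "En L t \<ge> 0"
  unfolding En_def using rho0 mpos by (intro sum_nonneg mult_nonneg_nonneg) (auto intro: less_imp_le)

lemma En_super: assumes t: "t \<in> {0..T}" and L: "L > 0" and G: "finite G"
  shows "(\<Sum>x\<in>G. rho x * vmeas w x * max (u x t - L) 0 powr k) \<le> En L t"
proof -
  let ?f = "\<lambda>x. rho x * vmeas w x * max (u x t - L) 0 powr k"
  have nn: "?f x \<ge> 0" for x using rho0[of x] mpos[of x] by simp
  have "sum ?f G = sum ?f (G \<inter> {x. u x t > L})"
    by (rule sum.mono_neutral_right) (use G in auto)
  also have "\<dots> \<le> sum ?f {x. u x t > L}"
    by (rule sum_mono2[OF level_finite[OF t L]]) (use nn in blast)+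
  finally show ?thesis unfolding En_def .
qed

end

context sol begin

lemma u_cont: "continuous_on {0..T} (u x)"
  using DERIV_continuous_on[of "{0..T}" "u x" "U' x"] der[of _ x] by blast

lemma SG_cont: "continuous_on {0..T} (\<lambda>s. \<Sum>x\<in>G. rho x * vmeas w x * max (u x s - L) 0 powr k)"
proof (intro continuous_on_sum continuous_on_mult continuous_on_const)
  fix x
  show "continuous_on {0..T} (\<lambda>s. max (u x s - L) 0 powr k)"
    by (rule continuous_on_powr') (use k in \<open>auto intro!: continuous_intros u_cont\<close>)
qed

lemma En_tail:
  assumes t: "t \<in> {0..T}" and L: "L > 0" and \<delta>: "\<delta> > 0"
  shows "0 \<le> En L t - (\<Sum>x\<in>{x. rho x \<ge> \<delta>}. rho x * vmeas w x * max (u x t - L) 0 powr k)"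
    "En L t - (\<Sum>x\<in>{x. rho x \<ge> \<delta>}. rho x * vmeas w x * max (u x t - L) 0 powr k)
       \<le> \<delta> * (Kb powr k * M / L powr r)"
proof -
  let ?f = "\<lambda>x. rho x * vmeas w x * max (u x t - L) 0 powr k"
  define G where "G = {x. rho x \<ge> \<delta>}"
  define Fs where "Fs = {x. u x t > L}"
  have G: "finite G" unfolding G_def by (rule rhotail[OF \<delta>])
  have Fs: "finite Fs" unfolding Fs_def by (rule level_finite[OF t L])
  have f0: "x \<notin> Fs \<Longrightarrow> ?f x = 0" for x unfolding Fs_def by simp
  have nn: "?f x \<ge> 0" for x using rho0[of x] mpos[of x] by simp
  have "En L t = sum ?f (Fs \<inter> G) + sum ?f (Fs - G)"
    unfolding En_def Fs_def[symmetric] using Fs by (rule sum.Int_Diff)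
  moreover have "sum ?f G = sum ?f (Fs \<inter> G)"
    by (rule sum.mono_neutral_right) (use G f0 in auto)
  ultimately have eq: "En L t - sum ?f G = sum ?f (Fs - G)" by simp
  show "0 \<le> En L t - sum ?f G" unfolding G_def[symmetric] eq using nn by (simp add: sum_nonneg)
  have pt: "?f x \<le> \<delta> * (Kb powr k / L powr r) * (\<bar>u x t\<bar> powr r * vmeas w x)" if x: "x \<in> Fs - G" for x
  proof -
    have ux: "u x t > L" using x unfolding Fs_def by simp
    have rx: "rho x \<le> \<delta>" using x unfolding G_def by simp
    have mk: "max (u x t - L) 0 powr k \<le> Kb powr k"
      using ubound[OF t, of x] ux k L by (intro powr_mono2) auto
    have lr1: "1 \<le> \<bar>u x t\<bar> powr r / L powr r"
    proof -
      have "L powr r \<le> \<bar>u x t\<bar> powr r" using ux L r by (intro powr_mono2) auto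
      thus ?thesis using L by simp
    qed
    have "?f x \<le> \<delta> * vmeas w x * Kb powr k"
      using rx mk mpos[of x] rho0[of x] \<delta> by (intro mult_mono) (auto intro: less_imp_le)
    also have "\<dots> \<le> \<delta> * vmeas w x * Kb powr k * (\<bar>u x t\<bar> powr r / L powr r)"
    proof -
      have "0 \<le> \<delta> * vmeas w x * Kb powr k" using \<delta> mpos[of x] by simp
      from mult_left_mono[OF lr1 this] show ?thesis by simp
    qed
    also have "\<dots> = \<delta> * (Kb powr k / L powr r) * (\<bar>u x t\<bar> powr r * vmeas w x)" by simp
    finally show ?thesis .
  qed
  have "sum ?f (Fs - G) \<le> (\<Sum>x\<in>Fs - G. \<delta> * (Kb powr k / L powr r) * (\<bar>u x t\<bar> powr r * vmeas w x))"
    by (rule sum_mono) (rule pt)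
  also have "\<dots> = \<delta> * (Kb powr k / L powr r) * (\<Sum>x\<in>Fs - G. \<bar>u x t\<bar> powr r * vmeas w x)"
    by (simp add: sum_distrib_left)
  also have "\<dots> \<le> \<delta> * (Kb powr k / L powr r) * M"
  proof (rule mult_left_mono)
    have "(\<Sum>x\<in>Fs - G. \<bar>u x t\<bar> powr r * vmeas w x) \<le> (\<Sum>\<^sub>\<infinity>x. \<bar>u x t\<bar> powr r * vmeas w x)"
      by (rule sum_le_infsum[OF lr[OF t]]) (use Fs in \<open>auto intro!: mult_nonneg_nonneg less_imp_le[OF mpos]\<close>)
    thus "(\<Sum>x\<in>Fs - G. \<bar>u x t\<bar> powr r * vmeas w x) \<le> M" using lrM[OF t] by simp
  qed (use \<delta> in simp)
  finally show "En L t - (\<Sum>x\<in>{x. rho x \<ge> \<delta>}. ?f x) \<le> \<delta> * (Kb powr k * M / L powr r)"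
    unfolding G_def[symmetric] eq by simp
qed

lemma En_cont: assumes L: "L > 0" shows "continuous_on {0..T} (En L)"
  unfolding continuous_on_iff
proof (intro ballI allI impI)
  fix t e :: real assume t: "t \<in> {0..T}" and e: "e > 0"
  define B0 where "B0 = Kb powr k * M / L powr r"
  have B0: "B0 \<ge> 0" unfolding B0_def using M0 by simp
  define \<delta> where "\<delta> = e / (3 * (B0 + 1))"
  have \<delta>: "\<delta> > 0" unfolding \<delta>_def using e B0 by simp
  have \<delta>B: "\<delta> * B0 \<le> e / 3"
  proof -
    have "\<delta> * B0 \<le> \<delta> * (B0 + 1)" using \<delta> by simp
    also have "\<dots> = e / 3"
    proof -
      have "B0 + 1 \<noteq> 0" "3 * B0 + 3 \<noteq> 0" using B0 by simp_all
      thus ?thesis unfolding \<delta>_def by (simp add: field_simps)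
    qed
    finally show ?thesis .
  qed
  define SG where "SG s = (\<Sum>x\<in>{x. rho x \<ge> \<delta>}. rho x * vmeas w x * max (u x s - L) 0 powr k)" for s
  have close: "\<bar>En L s - SG s\<bar> \<le> e / 3" if "s \<in> {0..T}" for s
  proof -
    have a: "0 \<le> En L s - SG s" "En L s - SG s \<le> \<delta> * B0"
      using En_tail[OF that L \<delta>] unfolding SG_def B0_def by simp_all
    hence "\<bar>En L s - SG s\<bar> = En L s - SG s" by simp
    thus ?thesis using a \<delta>B by linarith
  qed
  have cSG: "continuous_on {0..T} SG" unfolding SG_def by (rule SG_cont)
  have e3: "e / 3 > 0" using e by simp
  obtain d where d: "d > 0" "\<And>t'. t' \<in> {0..T} \<Longrightarrow> dist t' t < d \<Longrightarrow> dist (SG t') (SG t) < e / 3"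
    using cSG[unfolded continuous_on_iff, rule_format, OF t e3] by blast
  show "\<exists>d>0. \<forall>t'\<in>{0..T}. dist t' t < d \<longrightarrow> dist (En L t') (En L t) < e"
  proof (intro exI[of _ d] conjI ballI impI)
    fix t' assume t': "t' \<in> {0..T}" "dist t' t < d"
    have "\<bar>SG t' - SG t\<bar> < e / 3" using d(2)[OF t'] by (simp add: dist_real_def)
    thus "dist (En L t') (En L t) < e" using close[OF t'(1)] close[OF t] unfolding dist_real_def by arith
  qed (rule d)
qed

end

context sol begin

lemma der_at: assumes t: "t \<in> {0<..<T}" shows "((\<lambda>s. u x s) has_real_derivative U' x t) (at t)"
proof -
  have "t \<in> interior {0..T}" using t by simp
  from at_within_interior[OF this] der[of t x] t show ?thesis by simp
qed

lemma eqm: assumes t: "t \<in> {0<..<T}"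
  shows "rho x * vmeas w x * U' x t = (\<Sum>\<^sub>\<infinity>y. \<bar>u y t - u x t\<bar> powr (p-2) * (u y t - u x t) * w x y)"
proof -
  have "rho x * U' x t = plap w p (\<lambda>y. u y t) x" using eq[OF t, of x] by simp
  hence "vmeas w x * (rho x * U' x t) = vmeas w x * plap w p (\<lambda>y. u y t) x" by simp
  thus ?thesis unfolding plap_def using mpos[of x] by (simp add: algebra_simps)
qed

lemma dini:
  assumes t: "t \<in> {0<..<T}" and L: "L > 0" and \<eta>: "\<eta> > 0"
  shows "\<exists>\<delta>>0. \<forall>h. 0 < h \<and> h < \<delta> \<longrightarrow> En L (t - h) \<ge> En L t - Dv L t * h - \<eta> * h"
proof -
  have t': "t \<in> {0..T}" using t by simp
  define Fs where "Fs = {x. u x t > L}"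
  have Fs: "finite Fs" unfolding Fs_def by (rule level_finite[OF t' L])
  define St where "St s = (\<Sum>x\<in>Fs. rho x * vmeas w x * (u x s - L) powr k)" for s
  define D where "D = (\<Sum>x\<in>Fs. rho x * vmeas w x * (k * (u x t - L) powr (k - 1) * U' x t))"
  have dS: "(St has_real_derivative D) (at t)"
    unfolding St_def D_def
  proof (intro DERIV_sum DERIV_cmult)
    fix x assume x: "x \<in> Fs"
    hence ux: "u x t - L > 0" unfolding Fs_def by simp
    show "((\<lambda>s. (u x s - L) powr k) has_real_derivative k * (u x t - L) powr (k - 1) * U' x t) (at t)"
      using ux der_at[OF t, of x] by (auto intro!: derivative_eq_intros)
  qed
  have DD: "D = Dv L t"
    unfolding D_def Dv_def Fs_def[symmetric]
  proof (rule sum.cong[OF refl])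
    fix x assume x: "x \<in> Fs"
    hence ux: "u x t - L > 0" unfolding Fs_def by simp
    have "rho x * vmeas w x * (k * (u x t - L) powr (k - 1) * U' x t)
        = k * (u x t - L) powr (k - 1) * (rho x * vmeas w x * U' x t)" by (simp add: algebra_simps)
    also have "\<dots> = k * max (u x t - L) 0 powr (k - 1) * (\<Sum>\<^sub>\<infinity>y. \<bar>u y t - u x t\<bar> powr (p-2) * (u y t - u x t) * w x y)"
      using ux eqm[OF t, of x] by simp
    finally show "rho x * vmeas w x * (k * (u x t - L) powr (k - 1) * U' x t)
        = k * max (u x t - L) 0 powr (k - 1) * (\<Sum>\<^sub>\<infinity>y. \<bar>u y t - u x t\<bar> powr (p-2) * (u y t - u x t) * w x y)" .
  qed
  obtain \<delta>1 where \<delta>1: "\<delta>1 > 0" "\<And>h. 0 < h \<and> h < \<delta>1 \<Longrightarrow> \<bar>St (t - h) - St t + D * h\<bar> \<le> \<eta> * h"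
    using deriv_left_approx[OF dS \<eta>] by blast
  have ev: "\<forall>\<^sub>F s in at t. \<forall>x\<in>Fs. u x s > L"
  proof (rule eventually_ball_finite[OF Fs], rule ballI)
    fix x assume x: "x \<in> Fs"
    have "isCont (\<lambda>s. u x s) t" by (rule DERIV_isCont[OF der_at[OF t]])
    hence "((\<lambda>s. u x s) \<longlongrightarrow> u x t) (at t)" by (simp add: isCont_def)
    thus "\<forall>\<^sub>F s in at t. u x s > L" using x unfolding Fs_def by (intro order_tendstoD(1)) auto
  qed
  then obtain \<delta>2 where \<delta>2: "\<delta>2 > 0" "\<And>s. s \<noteq> t \<Longrightarrow> dist s t < \<delta>2 \<Longrightarrow> \<forall>x\<in>Fs. u x s > L"
    unfolding eventually_at by auto
  define \<delta> where "\<delta> = min (min \<delta>1 \<delta>2) t"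
  have \<delta>: "\<delta> > 0" unfolding \<delta>_def using \<delta>1 \<delta>2 t by auto
  show ?thesis
  proof (intro exI[of _ \<delta>] conjI allI impI \<delta>)
    fix h assume h: "0 < h \<and> h < \<delta>"
    have th: "t - h \<in> {0..T}" using h t unfolding \<delta>_def by auto
    have pos: "\<forall>x\<in>Fs. u x (t - h) > L" using \<delta>2(2)[of "t - h"] h unfolding \<delta>_def by (auto simp: dist_real_def)
    have "St (t - h) = (\<Sum>x\<in>Fs. rho x * vmeas w x * max (u x (t - h) - L) 0 powr k)"
      unfolding St_def using pos by (intro sum.cong refl) auto
    also have "\<dots> \<le> En L (t - h)" by (rule En_super[OF th L Fs])
    finally have a: "St (t - h) \<le> En L (t - h)" .
    have b: "St t = En L t" unfolding St_def En_def Fs_def by (intro sum.cong refl) auto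
    have c: "St (t - h) - St t + D * h \<ge> - (\<eta> * h)" using \<delta>1(2)[of h] h unfolding \<delta>_def by auto
    show "En L (t - h) \<ge> En L t - Dv L t * h - \<eta> * h" using a b c unfolding DD[symmetric] by linarith
  qed
qed

lemma Dv_le: assumes t: "t \<in> {0..T}" and L: "L > 0"
  shows "Dv L t \<le> - (k / gam powr p / 4) * Pv L t"
proof -
  have "finite {x. u x t > L}" by (rule level_finite[OF t L])
  from green[OF wsym wnn wsum, of "\<lambda>x. u x t" Kb L k p, OF _ _ L this k p]
  show ?thesis unfolding Dv_def Pv_def gam_def using u0 t ubound[OF t] by auto
qed

lemma Pv_nonneg: "Pv L t \<ge> 0"
  unfolding Pv_def by (intro infsum_nonneg) (auto intro!: mult_nonneg_nonneg wnn)

end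

context sol begin

definition Qv where "Qv ps L t = (\<Sum>x\<in>{x. u x t > L}. \<bar>max (u x t - L) 0 powr gam\<bar> powr ps * vmeas w x)"

lemma Qv_nonneg: "Qv ps L t \<ge> 0"
  unfolding Qv_def by (intro sum_nonneg mult_nonneg_nonneg) (auto intro: less_imp_le[OF mpos])

lemma sobQ:
  assumes sob: "\<forall>(U :: 'v set) (f :: 'v \<Rightarrow> real). finite U \<longrightarrow> (\<forall>x. x \<notin> U \<longrightarrow> f x = 0) \<longrightarrow>
     (\<Sum>x\<in>U. \<bar>f x\<bar> powr ps * vmeas w x) powr (1 / ps)
       \<le> CS * (\<Sum>\<^sub>\<infinity>(x, y). \<bar>f y - f x\<bar> powr p * w x y) powr (1 / p)"
    and t: "t \<in> {0..T}" and L: "L > 0"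
  shows "Qv ps L t powr (1 / ps) \<le> CS * Pv L t powr (1 / p)"
proof -
  have "finite {x. u x t > L}" by (rule level_finite[OF t L])
  moreover have "\<forall>x. x \<notin> {x. u x t > L} \<longrightarrow> max (u x t - L) 0 powr gam = 0" by simp
  ultimately show ?thesis using sob[rule_format, of "{x. u x t > L}" "\<lambda>x. max (u x t - L) 0 powr gam"]
    unfolding Qv_def Pv_def by simp
qed

lemma holderE:
  assumes e: "e > 1" and s: "s > 1" and es: "1/e + 1/s = 1" and ks: "k * s = gam * ps"
    and A: "\<And>G. finite G \<Longrightarrow> (\<Sum>x\<in>G. rho x powr e * vmeas w x) \<le> A"
    and t: "t \<in> {0..T}" and L: "L > 0"
  shows "En L t \<le> A powr (1/e) * Qv ps L t powr (1/s)"
proof -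
  define Fs where "Fs = {x. u x t > L}"
  have Fs: "finite Fs" unfolding Fs_def by (rule level_finite[OF t L])
  define v where "v x = max (u x t - L) 0" for x
  have v0: "v x \<ge> 0" for x unfolding v_def by simp
  have "En L t = (\<Sum>x\<in>Fs. rho x * v x powr k * vmeas w x)"
    unfolding En_def Fs_def v_def by (simp add: algebra_simps)
  also have "\<dots> \<le> (\<Sum>x\<in>Fs. rho x powr e * vmeas w x) powr (1/e) * (\<Sum>x\<in>Fs. (v x powr k) powr s * vmeas w x) powr (1/s)"
    by (rule holder_sum[OF Fs _ _ _ e s es]) (auto intro: less_imp_le[OF rho0] mpos)
  also have "(\<Sum>x\<in>Fs. (v x powr k) powr s * vmeas w x) = Qv ps L t"
    unfolding Qv_def Fs_def[symmetric]
  proof (intro sum.cong refl)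
    fix x
    have "(v x powr k) powr s = v x powr (gam * ps)" using ks by (simp add: powr_powr)
    also have "\<dots> = \<bar>v x powr gam\<bar> powr ps" using v0[of x] by (simp add: powr_powr)
    finally show "(v x powr k) powr s * vmeas w x = \<bar>max (u x t - L) 0 powr gam\<bar> powr ps * vmeas w x"
      unfolding v_def by simp
  qed
  also have "(\<Sum>x\<in>Fs. rho x powr e * vmeas w x) powr (1/e) * Qv ps L t powr (1/s) \<le> A powr (1/e) * Qv ps L t powr (1/s)"
  proof (rule mult_right_mono)
    show "(\<Sum>x\<in>Fs. rho x powr e * vmeas w x) powr (1/e) \<le> A powr (1/e)"
      using A[OF Fs] e by (intro powr_mono2) (auto intro!: sum_nonneg mult_nonneg_nonneg less_imp_le[OF mpos])
  qed simp
  finally show ?thesis .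
qed

end

context sol begin

lemma gam_p: "gam * p = k + p - 2" unfolding gam_def using p by simp

lemma gam_pos: "gam > 0" unfolding gam_def using p k by simp

lemma Dv_En:
  assumes sob: "\<forall>(U :: 'v set) (f :: 'v \<Rightarrow> real). finite U \<longrightarrow> (\<forall>x. x \<notin> U \<longrightarrow> f x = 0) \<longrightarrow>
     (\<Sum>x\<in>U. \<bar>f x\<bar> powr ps * vmeas w x) powr (1 / ps)
       \<le> CS * (\<Sum>\<^sub>\<infinity>(x, y). \<bar>f y - f x\<bar> powr p * w x y) powr (1 / p)"
    and CS: "CS > 0" and ps: "ps > 0"
    and e: "e > 1" and s: "s > 1" and es: "1/e + 1/s = 1" and ks: "k * s = gam * ps"
    and A: "\<And>G. finite G \<Longrightarrow> (\<Sum>x\<in>G. rho x powr e * vmeas w x) \<le> A" and A0: "A > 0"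
    and t: "t \<in> {0..T}" and L: "L > 0"
  shows "Dv L t \<le> - ((k / gam powr p / 4) / (A powr ((gam * p / k) / e) * CS powr p)) * En L t powr (gam * p / k)"
proof -
  define \<alpha> where "\<alpha> = gam * p / k"
  define E where "E = En L t"
  define Q where "Q = Qv ps L t"
  define P where "P = Pv L t"
  have E0: "E \<ge> 0" unfolding E_def by (rule En_nonneg)
  have Q0: "Q \<ge> 0" unfolding Q_def by (rule Qv_nonneg)
  have P0: "P \<ge> 0" unfolding P_def by (rule Pv_nonneg)
  have \<alpha>0: "\<alpha> > 0" unfolding \<alpha>_def using gam_pos p k by simp
  have as: "\<alpha> / s = p / ps"
  proof -
    have "s = gam * ps / k" using ks k by (simp add: field_simps)
    thus ?thesis unfolding \<alpha>_def using k gam_pos ps by (simp add: field_simps)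
  qed
  have h1: "E \<le> A powr (1/e) * Q powr (1/s)" unfolding E_def Q_def by (rule holderE[OF e s es ks A t L])
  have "E powr \<alpha> \<le> (A powr (1/e) * Q powr (1/s)) powr \<alpha>" using h1 E0 \<alpha>0 by (intro powr_mono2) auto
  also have "\<dots> = A powr (\<alpha>/e) * Q powr (\<alpha>/s)" by (simp add: powr_mult powr_powr)
  also have "Q powr (\<alpha>/s) = (Q powr (1/ps)) powr p" unfolding as by (simp add: powr_powr)
  also have "(Q powr (1/ps)) powr p \<le> (CS * P powr (1/p)) powr p"
    using sobQ[OF sob t L] p unfolding Q_def P_def by (intro powr_mono2) auto
  also have "\<dots> = CS powr p * P" using P0 p CS by (simp add: powr_mult powr_powr)
  finally have h2: "E powr \<alpha> \<le> A powr (\<alpha>/e) * (CS powr p * P)" using A0 by (simp add: mult_left_mono)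
  define B where "B = A powr (\<alpha>/e) * CS powr p"
  have B0: "B > 0" unfolding B_def using A0 CS by simp
  have h3: "E powr \<alpha> / B \<le> P" using h2 B0 unfolding B_def by (simp add: field_simps)
  have c0: "k / gam powr p / 4 \<ge> 0" using k gam_pos by simp
  have "Dv L t \<le> - (k / gam powr p / 4) * P" unfolding P_def by (rule Dv_le[OF t L])
  also have "\<dots> \<le> - (k / gam powr p / 4) * (E powr \<alpha> / B)"
    using mult_left_mono[OF h3 c0] by linarith
  finally show ?thesis unfolding E_def B_def \<alpha>_def by (simp add: field_simps)
qed

end

context sol begin

lemma final:
  assumes sob: "\<forall>(U :: 'v set) (f :: 'v \<Rightarrow> real). finite U \<longrightarrow> (\<forall>x. x \<notin> U \<longrightarrow> f x = 0) \<longrightarrow>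
     (\<Sum>x\<in>U. \<bar>f x\<bar> powr ps * vmeas w x) powr (1 / ps)
       \<le> CS * (\<Sum>\<^sub>\<infinity>(x, y). \<bar>f y - f x\<bar> powr p * w x y) powr (1 / p)"
    and CS: "CS > 0" and ps: "ps > 0"
    and e: "e > 1" and s: "s > 1" and es: "1/e + 1/s = 1" and ks: "k * s = gam * ps"
    and A: "\<And>G. finite G \<Longrightarrow> (\<Sum>x\<in>G. rho x powr e * vmeas w x) \<le> A" and A0: "A > 0"
    and t0: "0 < t0" "t0 < T"
  defines "\<alpha> \<equiv> gam * p / k"
  defines "c1 \<equiv> (k / gam powr p / 4) / (A powr (\<alpha> / e) * CS powr p)"
  defines "\<Phi>1 \<equiv> (c1 / 2 * (\<alpha> - 1) * (t0 / 2) / 2) powr (- 1 / (\<alpha> - 1))"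
  defines "K1 \<equiv> 4 * \<Phi>1 / t0"
  defines "\<Psi> \<equiv> ((CS * (4 * K1 / (k / gam powr p)) powr (1 / p)) powr ps / cm) powr (1 / (gam * ps))"
  shows "u x t0 \<le> \<Psi>"
proof (rule field_le_epsilon)
  fix \<epsilon> :: real assume \<epsilon>: "\<epsilon> > 0"
  have \<alpha>1: "\<alpha> > 1" unfolding \<alpha>_def using gam_p k p by simp
  define c0 where "c0 = k / gam powr p"
  have c0: "c0 > 0" unfolding c0_def using k gam_pos by simp
  have c1: "c1 > 0" unfolding c1_def using k gam_pos A0 CS by simp
  have \<Phi>1: "\<Phi>1 > 0" unfolding \<Phi>1_def using c1 \<alpha>1 t0 by simp
  have K1: "K1 > 0" unfolding K1_def using \<Phi>1 t0 by simp
  have DvE: "Dv L t \<le> - c1 * En L t powr \<alpha>" if "t \<in> {0..T}" "L > 0" for t L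
    using Dv_En[OF sob CS ps e s es ks A A0 that] unfolding c1_def \<alpha>_def by simp
  have Dv0: "Dv L t \<le> 0" if "t \<in> {0..T}" "L > 0" for t L
  proof -
    have "0 \<le> c1 * En L t powr \<alpha>" using c1 by simp
    thus ?thesis using DvE[OF that] by linarith
  qed
  have E1: "En \<epsilon> (t0 / 2) \<le> \<Phi>1"
    unfolding \<Phi>1_def
  proof (rule ode_lemma)
    show "0 < t0 / 2" using t0 by simp
    show "0 < c1 / 2" using c1 by simp
    show "1 < \<alpha>" by (rule \<alpha>1)
    show "continuous_on {0..t0 / 2} (En \<epsilon>)"
      by (rule continuous_on_subset[OF En_cont[OF \<epsilon>]]) (use t0 in auto)
    show "\<And>t. t \<in> {0..t0 / 2} \<Longrightarrow> 0 \<le> En \<epsilon> t" by (rule En_nonneg)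
    fix t assume t: "t \<in> {0<..t0 / 2}" and Et: "En \<epsilon> t > 0"
    have tT: "t \<in> {0<..<T}" using t t0 by auto
    have \<eta>: "c1 / 2 * En \<epsilon> t powr \<alpha> > 0" using c1 Et by simp
    obtain \<delta> where \<delta>: "\<delta> > 0" "\<And>h. 0 < h \<and> h < \<delta> \<Longrightarrow> En \<epsilon> (t - h) \<ge> En \<epsilon> t - Dv \<epsilon> t * h - (c1 / 2 * En \<epsilon> t powr \<alpha>) * h"
      using dini[OF tT \<epsilon> \<eta>] by blast
    show "\<exists>\<delta>>0. \<forall>h. 0 < h \<and> h < \<delta> \<longrightarrow> En \<epsilon> (t - h) \<ge> En \<epsilon> t + c1 / 2 * En \<epsilon> t powr \<alpha> * h"
    proof (intro exI[of _ \<delta>] conjI allI impI \<delta>(1))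
      fix h assume h: "0 < h \<and> h < \<delta>"
      have "Dv \<epsilon> t * h \<le> - c1 * En \<epsilon> t powr \<alpha> * h"
        using DvE[of t \<epsilon>] tT \<epsilon> h by (intro mult_right_mono) auto
      thus "En \<epsilon> (t - h) \<ge> En \<epsilon> t + c1 / 2 * En \<epsilon> t powr \<alpha> * h" using \<delta>(2)[OF h] by linarith
    qed
  qed
  obtain \<tau> where \<tau>: "\<tau> \<in> {t0/2<..t0}" "Dv \<epsilon> \<tau> \<ge> - K1"
  proof (rule ccontr)
    assume "\<not> thesis"
    with that have neg: "\<And>\<tau>. \<tau> \<in> {t0/2<..t0} \<Longrightarrow> Dv \<epsilon> \<tau> < - K1" by force
    have "En \<epsilon> t0 \<le> En \<epsilon> (t0/2) - K1 * (t0 - t0/2)"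
    proof (rule mono_lemma)
      show "t0 / 2 < t0" using t0 by simp
      show "continuous_on {t0 / 2..t0} (En \<epsilon>)"
        by (rule continuous_on_subset[OF En_cont[OF \<epsilon>]]) (use t0 in auto)
      fix t assume t: "t \<in> {t0 / 2<..t0}"
      have tT: "t \<in> {0<..<T}" using t t0 by auto
      define \<eta> where "\<eta> = (- Dv \<epsilon> t - K1) / 2"
      have \<eta>: "\<eta> > 0" unfolding \<eta>_def using neg[OF t] by simp
      obtain \<delta> where \<delta>: "\<delta> > 0" "\<And>h. 0 < h \<and> h < \<delta> \<Longrightarrow> En \<epsilon> (t - h) \<ge> En \<epsilon> t - Dv \<epsilon> t * h - \<eta> * h"
        using dini[OF tT \<epsilon> \<eta>] by blast
      show "\<exists>\<delta>>0. \<forall>h. 0 < h \<and> h < \<delta> \<longrightarrow> En \<epsilon> (t - h) > En \<epsilon> t + K1 * h"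
      proof (intro exI[of _ \<delta>] conjI allI impI \<delta>(1))
        fix h assume h: "0 < h \<and> h < \<delta>"
        have "- Dv \<epsilon> t - \<eta> > K1" using neg[OF t] unfolding \<eta>_def by (simp add: field_simps)
        hence "(- Dv \<epsilon> t - \<eta>) * h > K1 * h" using h by (intro mult_strict_right_mono) auto
        thus "En \<epsilon> (t - h) > En \<epsilon> t + K1 * h" using \<delta>(2)[OF h] by (simp add: algebra_simps)
      qed
    qed
    also have "K1 * (t0 - t0/2) = 2 * \<Phi>1" unfolding K1_def using t0 by (simp add: field_simps)
    finally have "En \<epsilon> t0 \<le> En \<epsilon> (t0/2) - 2 * \<Phi>1" .
    with E1 \<Phi>1 En_nonneg[of \<epsilon> t0] show False by linarith
  qed
  have \<tau>T: "\<tau> \<in> {0..T}" using \<tau> t0 by auto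
  have Pb: "Pv \<epsilon> \<tau> \<le> 4 * K1 / c0"
  proof -
    have "- K1 \<le> - (c0 / 4) * Pv \<epsilon> \<tau>" using \<tau>(2) Dv_le[OF \<tau>T \<epsilon>] unfolding c0_def by simp
    thus ?thesis using c0 by (simp add: field_simps)
  qed
  define X where "X = CS * (4 * K1 / c0) powr (1 / p)"
  have X0: "X \<ge> 0" unfolding X_def using CS by simp
  have QX: "Qv ps \<epsilon> \<tau> powr (1 / ps) \<le> X"
  proof -
    have "Qv ps \<epsilon> \<tau> powr (1 / ps) \<le> CS * Pv \<epsilon> \<tau> powr (1 / p)" by (rule sobQ[OF sob \<tau>T \<epsilon>])
    also have "\<dots> \<le> X" unfolding X_def using Pb CS p Pv_nonneg[of \<epsilon> \<tau>]
      by (intro mult_left_mono powr_mono2) auto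
    finally show ?thesis .
  qed
  have QX2: "Qv ps \<epsilon> \<tau> \<le> X powr ps"
  proof -
    have "(Qv ps \<epsilon> \<tau> powr (1 / ps)) powr ps \<le> X powr ps" using QX ps by (intro powr_mono2) auto
    thus ?thesis using ps Qv_nonneg[of ps \<epsilon> \<tau>] by (simp add: powr_powr)
  qed
  have \<Psi>eq: "\<Psi> = (X powr ps / cm) powr (1 / (gam * ps))" unfolding \<Psi>_def X_def c0_def by simp
  have ut: "u y \<tau> \<le> \<epsilon> + \<Psi>" for y
  proof (cases "u y \<tau> > \<epsilon>")
    case False
    have "\<Psi> \<ge> 0" unfolding \<Psi>_def by simp
    thus ?thesis using False by simp
  next
    case True
    define v where "v = u y \<tau> - \<epsilon>"
    have v: "v > 0" unfolding v_def using True by simp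
    have "\<bar>max (u y \<tau> - \<epsilon>) 0 powr gam\<bar> powr ps * vmeas w y \<le> Qv ps \<epsilon> \<tau>"
      unfolding Qv_def
      by (rule member_le_sum) (use True level_finite[OF \<tau>T \<epsilon>] in \<open>auto intro!: mult_nonneg_nonneg less_imp_le[OF mpos]\<close>)
    hence "v powr (gam * ps) * vmeas w y \<le> X powr ps" using QX2 v unfolding v_def by (simp add: powr_powr)
    moreover have "v powr (gam * ps) * cm \<le> v powr (gam * ps) * vmeas w y" using mlow[of y] by (intro mult_left_mono) auto
    ultimately have "v powr (gam * ps) \<le> X powr ps / cm" using cm by (simp add: field_simps)
    hence "(v powr (gam * ps)) powr (1 / (gam * ps)) \<le> (X powr ps / cm) powr (1 / (gam * ps))"
      using gam_pos ps by (intro powr_mono2) auto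
    hence "v \<le> \<Psi>" unfolding \<Psi>eq using v gam_pos ps by (simp add: powr_powr)
    thus ?thesis unfolding v_def by simp
  qed
  define L2 where "L2 = \<epsilon> + \<Psi>"
  have \<Psi>0: "\<Psi> \<ge> 0" unfolding \<Psi>_def by simp
  have L2: "L2 > 0" unfolding L2_def using \<epsilon> \<Psi>0 by simp
  have Etau: "En L2 \<tau> = 0"
  proof -
    have "{x. u x \<tau> > L2} = {}" unfolding L2_def using ut by (auto simp: not_less)
    thus ?thesis unfolding En_def by simp
  qed
  have Et0: "En L2 t0 \<le> 0"
  proof (cases "\<tau> = t0")
    case True thus ?thesis using Etau by simp
  next
    case False
    hence \<tau>t0: "\<tau> < t0" using \<tau>(1) by simp
    show ?thesis
    proof (rule field_le_epsilon[where y = 0, simplified])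
      fix \<delta>' :: real assume \<delta>': "\<delta>' > 0"
      define d where "d = \<delta>' / (t0 - \<tau>)"
      have d: "d > 0" unfolding d_def using \<delta>' \<tau>t0 by simp
      have "En L2 t0 \<le> En L2 \<tau> - (- d) * (t0 - \<tau>)"
      proof (rule mono_lemma[OF \<tau>t0])
        show "continuous_on {\<tau>..t0} (En L2)"
          by (rule continuous_on_subset[OF En_cont[OF L2]]) (use \<tau> t0 in auto)
        fix t assume t: "t \<in> {\<tau><..t0}"
        have tT: "t \<in> {0<..<T}" using t \<tau> t0 by auto
        have d2: "d / 2 > 0" using d by simp
        obtain \<delta> where \<delta>: "\<delta> > 0" "\<And>h. 0 < h \<and> h < \<delta> \<Longrightarrow> En L2 (t - h) \<ge> En L2 t - Dv L2 t * h - d / 2 * h"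
          using dini[OF tT L2 d2] by blast
        show "\<exists>\<delta>>0. \<forall>h. 0 < h \<and> h < \<delta> \<longrightarrow> En L2 (t - h) > En L2 t + - d * h"
        proof (intro exI[of _ \<delta>] conjI allI impI \<delta>(1))
          fix h assume h: "0 < h \<and> h < \<delta>"
          have "Dv L2 t * h \<le> 0" using Dv0[of t L2] tT L2 h by (simp add: mult_nonpos_nonneg)
          moreover have "d / 2 * h < d * h" using d h by simp
          ultimately show "En L2 (t - h) > En L2 t + - d * h" using \<delta>(2)[OF h] by linarith
        qed
      qed
      also have "\<dots> = \<delta>'" unfolding Etau d_def using \<tau>t0 by simp
      finally show "En L2 t0 \<le> \<delta>'" .
    qed
  qed
  show "u x t0 \<le> \<Psi> + \<epsilon>"
  proof (rule ccontr)
    assume "\<not> ?thesis"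
    hence ux: "u x t0 > L2" unfolding L2_def by simp
    have t0T: "t0 \<in> {0..T}" using t0 by simp
    have "rho x * vmeas w x * max (u x t0 - L2) 0 powr k \<le> En L2 t0"
      unfolding En_def
      by (rule member_le_sum) (use ux level_finite[OF t0T L2] in \<open>auto intro!: mult_nonneg_nonneg less_imp_le[OF mpos] less_imp_le[OF rho0]\<close>)
    moreover have "rho x * vmeas w x * max (u x t0 - L2) 0 powr k > 0" using ux rho0[of x] mpos[of x] by simp
    ultimately show False using Et0 by simp
  qed
qed

end

lemma scale_aux:
  fixes CS c0 cm c1 \<alpha> g p ps t :: real
  assumes pos: "CS > 0" "c0 > 0" "cm > 0" "c1 > 0" "\<alpha> > 1" "p > 2" "ps > 0" "g > 0" "t > 0"
  shows "((CS * (4 * (4 * (c1 / 2 * (\<alpha> - 1) * (t / 2) / 2) powr (- 1 / (\<alpha> - 1)) / t) / c0) powr (1 / p)) powr ps / cm) powr (1 / (g * ps))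
    = ((CS * (16 * (c1 * (\<alpha> - 1) / 8) powr (- 1 / (\<alpha> - 1)) / c0) powr (1 / p)) powr ps / cm) powr (1 / (g * ps))
      * t powr ((- 1 / (\<alpha> - 1) - 1) / (g * p))"
proof -
  define q1 where "q1 = - 1 / (\<alpha> - 1)"
  define a1 where "a1 = c1 * (\<alpha> - 1) / 8"
  have a1: "a1 > 0" unfolding a1_def using pos by simp
  define B1 where "B1 = 16 * a1 powr q1 / c0"
  have B1: "B1 > 0" unfolding B1_def using a1 pos by simp
  have s1: "c1 / 2 * (\<alpha> - 1) * (t / 2) / 2 = a1 * t" unfolding a1_def by simp
  have s2: "4 * (4 * (a1 * t) powr q1 / t) / c0 = B1 * t powr (q1 - 1)"
    unfolding B1_def using pos a1 by (simp add: powr_mult powr_diff mult.commute mult.assoc)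
  have s3: "(B1 * t powr (q1 - 1)) powr (1 / p) = B1 powr (1/p) * t powr ((q1 - 1) / p)"
    using B1 pos by (simp add: powr_mult powr_powr)
  have s4: "(CS * (B1 powr (1/p) * t powr ((q1 - 1) / p))) powr ps = (CS * B1 powr (1/p)) powr ps * t powr ((q1 - 1) / p * ps)"
    using B1 pos by (simp add: powr_mult powr_powr mult.assoc)
  have s5: "((CS * B1 powr (1/p)) powr ps * t powr ((q1 - 1) / p * ps) / cm) powr (1 / (g * ps))
     = ((CS * B1 powr (1/p)) powr ps / cm) powr (1 / (g * ps)) * t powr ((q1 - 1) / (g * p))"
  proof -
    have "(CS * B1 powr (1/p)) powr ps * t powr ((q1 - 1) / p * ps) / cm
        = ((CS * B1 powr (1/p)) powr ps / cm) * t powr ((q1 - 1) / p * ps)" by simp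
    hence "((CS * B1 powr (1/p)) powr ps * t powr ((q1 - 1) / p * ps) / cm) powr (1 / (g * ps))
        = ((CS * B1 powr (1/p)) powr ps / cm) powr (1 / (g * ps)) * t powr ((q1 - 1) / p * ps * (1 / (g * ps)))"
      by (simp only: powr_mult powr_powr)
    moreover have "(q1 - 1) / p * ps * (1 / (g * ps)) = (q1 - 1) / (g * p)" using pos by (simp add: field_simps)
    ultimately show ?thesis by simp
  qed
  show ?thesis
    unfolding q1_def[symmetric] s1 s2 s3 s4 s5
    unfolding B1_def a1_def by simp
qed

lemma neg_div_cancel: "(a::real) \<noteq> 0 \<Longrightarrow> - a / b / a = - 1 / b"
  by (cases "b = 0") (simp_all add: field_simps)

theorem theorem1p2:
  fixes w :: "'v \<Rightarrow> 'v \<Rightarrow> real" and x0 :: 'v and p N :: real and rho0 :: "nat \<Rightarrow> real"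
  assumes "2 < p" and "p < N"
    and "weighted_graph w"
    and "bdd_above (range (vmeas w))" and "(INF x. vmeas w x) > 0"
    and "sobolev w N p"
    and "\<forall>n. rho0 n > 0" and "antimono rho0" and "\<forall>n. rho0 n \<le> 1"
  shows "\<exists>\<nu>0 > 0. \<forall>\<nu> \<ge> \<nu>0.
     (\<lambda>x. rho0 (gdist w x0 x) powr (N * (p - 1 + \<nu>) / ((N * (p - 2) + p) + p * \<nu>)) * vmeas w x)
        summable_on UNIV \<longrightarrow>
     (\<exists>C. \<forall>u :: 'v \<Rightarrow> real \<Rightarrow> real.
        (\<forall>x t. t \<ge> 0 \<longrightarrow> u x t \<ge> 0) \<longrightarrow>
        (\<forall>T > 0. is_solution w p (\<lambda>x. rho0 (gdist w x0 x)) u T) \<longrightarrow>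
        (\<forall>t > 0. \<forall>x. \<bar>u x t\<bar> \<le> C * t powr (- 1 / (p - 2))))"
proof -
  have p: "p > 2" and pN: "p < N" using assms(1,2) .
  have wg: "\<And>x y. w x y = w y x" "\<And>x y. w x y \<ge> 0" "\<And>x. w x summable_on UNIV"
    using assms(3) unfolding weighted_graph_def by auto
  define cm where "cm = (INF x. vmeas w x)"
  have cm: "cm > 0" unfolding cm_def using assms(5) .
  have mnn: "vmeas w x \<ge> 0" for x unfolding vmeas_def using wg(2) by (intro infsum_nonneg) auto
  have mlow: "vmeas w x \<ge> cm" for x
    unfolding cm_def by (rule cINF_lower) (auto intro!: bdd_belowI2[of _ 0] mnn)
  obtain C0 where C0: "\<forall>(U :: 'v set) (f :: 'v \<Rightarrow> real). finite U \<longrightarrow> (\<forall>x. x \<notin> U \<longrightarrow> f x = 0) \<longrightarrow>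
     (\<Sum>x\<in>U. \<bar>f x\<bar> powr (N * p / (N - p)) * vmeas w x) powr (1 / (N * p / (N - p)))
       \<le> C0 * (\<Sum>\<^sub>\<infinity>(x, y). \<bar>f y - f x\<bar> powr p * w x y) powr (1 / p)"
    using assms(6) unfolding sobolev_def by blast
  define CS where "CS = max C0 1"
  have CS: "CS > 0" unfolding CS_def by simp
  define ps where "ps = N * p / (N - p)"
  have ps: "ps > 0" unfolding ps_def using p pN by simp
  have sob: "\<forall>(U :: 'v set) (f :: 'v \<Rightarrow> real). finite U \<longrightarrow> (\<forall>x. x \<notin> U \<longrightarrow> f x = 0) \<longrightarrow>
     (\<Sum>x\<in>U. \<bar>f x\<bar> powr ps * vmeas w x) powr (1 / ps)
       \<le> CS * (\<Sum>\<^sub>\<infinity>(x, y). \<bar>f y - f x\<bar> powr p * w x y) powr (1 / p)"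
  proof (intro allI impI)
    fix U :: "'v set" and f :: "'v \<Rightarrow> real" assume U: "finite U" "\<forall>x. x \<notin> U \<longrightarrow> f x = 0"
    have "(\<Sum>x\<in>U. \<bar>f x\<bar> powr ps * vmeas w x) powr (1 / ps)
       \<le> C0 * (\<Sum>\<^sub>\<infinity>(x, y). \<bar>f y - f x\<bar> powr p * w x y) powr (1 / p)"
      using C0 U unfolding ps_def by blast
    also have "\<dots> \<le> CS * (\<Sum>\<^sub>\<infinity>(x, y). \<bar>f y - f x\<bar> powr p * w x y) powr (1 / p)"
      unfolding CS_def by (intro mult_right_mono) auto
    finally show "(\<Sum>x\<in>U. \<bar>f x\<bar> powr ps * vmeas w x) powr (1 / ps)
       \<le> CS * (\<Sum>\<^sub>\<infinity>(x, y). \<bar>f y - f x\<bar> powr p * w x y) powr (1 / p)" .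
  qed
  show ?thesis
  proof (rule exI[of _ "1::real"], intro conjI allI impI)
    fix \<nu> :: real assume \<nu>: "\<nu> \<ge> 1"
    define rho where "rho x = rho0 (gdist w x0 x)" for x
    define e where "e = N * (p - 1 + \<nu>) / ((N * (p - 2) + p) + p * \<nu>)"
    assume summ: "(\<lambda>x. rho0 (gdist w x0 x) powr (N * (p - 1 + \<nu>) / ((N * (p - 2) + p) + p * \<nu>)) * vmeas w x)
        summable_on UNIV"
    hence summ': "(\<lambda>x. rho x powr e * vmeas w x) summable_on UNIV" unfolding rho_def e_def .
    define k where "k = \<nu> + 1"
    have k: "k \<ge> 2" unfolding k_def using \<nu> by simp
    define gam where "gam = (k + p - 2) / p"
    define s where "s = gam * ps / k"
    define A where "A = (\<Sum>\<^sub>\<infinity>x. rho x powr e * vmeas w x) + 1"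
    define \<alpha> where "\<alpha> = gam * p / k"
    define c0 where "c0 = k / gam powr p"
    define c1 where "c1 = (k / gam powr p / 4) / (A powr (\<alpha> / e) * CS powr p)"
    define C where "C = ((CS * (16 * (c1 * (\<alpha> - 1) / 8) powr (- 1 / (\<alpha> - 1)) / c0) powr (1 / p)) powr ps / cm) powr (1 / (gam * ps))"
    have rho0': "rho x > 0" "rho x \<le> 1" for x unfolding rho_def using assms(7,9) by auto
    have den: "(N * (p - 2) + p) + p * \<nu> > 0" using p pN \<nu> by (simp add: add_pos_pos)
    have e1: "e > 1"
    proof -
      have "p * (1 + \<nu>) < N * (1 + \<nu>)" using pN \<nu> by (intro mult_strict_right_mono) auto
      hence X: "p + \<nu> * p < N + N * \<nu>" by (simp add: algebra_simps)
      show ?thesis unfolding e_def using den X by (simp add: field_simps)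
    qed
    have es: "1 / e + 1 / s = 1"
    proof -
      have nz: "N \<noteq> 0" "\<nu> + p - 1 \<noteq> 0" "N - p \<noteq> 0" "\<nu> + 1 \<noteq> 0" "p \<noteq> 0" "p - 1 + \<nu> \<noteq> 0"
        using p pN \<nu> by auto
      have gps: "gam * ps = N * (\<nu> + p - 1) / (N - p)"
      proof -
        have "gam = (\<nu> + p - 1) / p" unfolding gam_def k_def by simp
        hence "gam * ps = (\<nu> + p - 1) / p * (N * p / (N - p))" unfolding ps_def by simp
        also have "\<dots> = N * (\<nu> + p - 1) / (N - p)" using nz by (simp add: field_simps)
        finally show ?thesis .
      qed
      have s_eq: "s = N * (\<nu> + p - 1) / ((N - p) * (\<nu> + 1))"
        unfolding s_def gps k_def using nz by (simp add: field_simps)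
      have "1 / e = ((N * (p - 2) + p) + p * \<nu>) / (N * (p - 1 + \<nu>))" unfolding e_def by simp
      moreover have "1 / s = (N - p) * (\<nu> + 1) / (N * (p - 1 + \<nu>))" unfolding s_eq by (simp add: algebra_simps)
      ultimately have "1 / e + 1 / s = (((N * (p - 2) + p) + p * \<nu>) + (N - p) * (\<nu> + 1)) / (N * (p - 1 + \<nu>))"
        by (simp add: add_divide_distrib)
      also have "((N * (p - 2) + p) + p * \<nu>) + (N - p) * (\<nu> + 1) = N * (p - 1 + \<nu>)" by (simp add: algebra_simps)
      also have "N * (p - 1 + \<nu>) / (N * (p - 1 + \<nu>)) = 1" using nz by simp
      finally show ?thesis .
    qed
    have e0: "e > 0" using e1 by simp
    have s1: "s > 1"
    proof -
      have "1 / e < 1" using e1 by simp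
      hence "1 / s > 0" using es by linarith
      moreover have "1 / s < 1" using es e0 by (smt (verit) divide_pos_pos zero_less_one)
      ultimately show ?thesis by (simp add: field_simps split: if_splits)
    qed
    have ks: "k * s = gam * ps" unfolding s_def using k by simp
    have A0: "A > 0" unfolding A_def using summ' by (smt (verit) infsum_nonneg mnn mult_nonneg_nonneg powr_ge_zero)
    have Ab: "(\<Sum>x\<in>G. rho x powr e * vmeas w x) \<le> A" if "finite G" for G
    proof -
      have "(\<Sum>x\<in>G. rho x powr e * vmeas w x) \<le> (\<Sum>\<^sub>\<infinity>x. rho x powr e * vmeas w x)"
        by (rule sum_le_infsum[OF summ']) (use that mnn in auto)
      thus ?thesis unfolding A_def by simp
    qed
    have tail: "finite {x. rho x \<ge> \<delta>}" if \<delta>: "\<delta> > 0" for \<delta>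
    proof -
      have "finite {x. rho x powr e * vmeas w x \<ge> \<delta> powr e * cm}"
        by (rule finite_level[OF summ']) (use mnn \<delta> cm in auto)
      moreover have "{x. rho x \<ge> \<delta>} \<subseteq> {x. rho x powr e * vmeas w x \<ge> \<delta> powr e * cm}"
      proof safe
        fix x assume "rho x \<ge> \<delta>"
        hence "\<delta> powr e \<le> rho x powr e" using \<delta> e0 by (intro powr_mono2) auto
        thus "\<delta> powr e * cm \<le> rho x powr e * vmeas w x" using mlow[of x] cm \<delta> by (intro mult_mono) auto
      qed
      ultimately show ?thesis by (rule finite_subset[rotated])
    qed
    show "\<exists>C. \<forall>u :: 'v \<Rightarrow> real \<Rightarrow> real.
        (\<forall>x t. t \<ge> 0 \<longrightarrow> u x t \<ge> 0) \<longrightarrow>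
        (\<forall>T > 0. is_solution w p (\<lambda>x. rho0 (gdist w x0 x)) u T) \<longrightarrow>
        (\<forall>t > 0. \<forall>x. \<bar>u x t\<bar> \<le> C * t powr (- 1 / (p - 2)))"
    proof (intro exI[of _ C] allI impI)
      fix u :: "'v \<Rightarrow> real \<Rightarrow> real" and t0 :: real and x :: 'v
      assume unn: "\<forall>x t. t \<ge> 0 \<longrightarrow> u x t \<ge> 0"
        and sols: "\<forall>T > 0. is_solution w p (\<lambda>x. rho0 (gdist w x0 x)) u T" and t0: "t0 > 0"
      define T where "T = 2 * t0"
      have T: "T > 0" "t0 < T" unfolding T_def using t0 by auto
      have isol: "is_solution w p rho u T" using sols T unfolding rho_def by auto
      obtain r M where rM: "r \<ge> 1" "\<forall>t \<in> {0..T}.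
        (\<lambda>x. \<bar>u x t\<bar> powr r * vmeas w x) summable_on UNIV \<and>
        (\<Sum>\<^sub>\<infinity>x. \<bar>u x t\<bar> powr r * vmeas w x) \<le> M"
        using isol unfolding is_solution_def by blast
      have "\<forall>x. \<exists>u'. continuous_on {0..T} u' \<and>
        (\<forall>t \<in> {0..T}. ((\<lambda>s. u x s) has_real_derivative u' t) (at t within {0..T})) \<and>
        (\<forall>t \<in> {0<..<T}. rho x * u' t - plap w p (\<lambda>y. u y t) x = 0)"
        using isol unfolding is_solution_def by blast
      then obtain U' where U': "\<And>x. (\<forall>t \<in> {0..T}. ((\<lambda>s. u x s) has_real_derivative U' x t) (at t within {0..T})) \<and>
        (\<forall>t \<in> {0<..<T}. rho x * U' x t - plap w p (\<lambda>y. u y t) x = 0)"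
        by metis
      interpret S: sol w rho u U' p T r M k cm
      proof
        show "\<And>x y. w x y = w y x" by (rule wg(1))
        show "\<And>x y. w x y \<ge> 0" by (rule wg(2))
        show "\<And>x. w x summable_on UNIV" by (rule wg(3))
        show "\<And>x. vmeas w x \<ge> cm" by (rule mlow)
        show "cm > 0" by (rule cm)
        show "\<And>x. rho x > 0" by (rule rho0'(1))
        show "\<And>x. rho x \<le> 1" by (rule rho0'(2))
        show "\<And>\<delta>. \<delta> > 0 \<Longrightarrow> finite {x. rho x \<ge> \<delta>}" by (rule tail)
        show "T > 0" by (rule T(1))
        show "\<And>x t. t \<ge> 0 \<Longrightarrow> u x t \<ge> 0" using unn by blast
        show "r \<ge> 1" by (rule rM(1))
        show "\<And>t. t \<in> {0..T} \<Longrightarrow> (\<lambda>x. \<bar>u x t\<bar> powr r * vmeas w x) summable_on UNIV" using rM(2) by blast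
        show "\<And>t. t \<in> {0..T} \<Longrightarrow> (\<Sum>\<^sub>\<infinity>x. \<bar>u x t\<bar> powr r * vmeas w x) \<le> M" using rM(2) by blast
        show "\<And>x t. t \<in> {0..T} \<Longrightarrow> ((\<lambda>s. u x s) has_real_derivative U' x t) (at t within {0..T})" using U' by blast
        show "\<And>x t. t \<in> {0<..<T} \<Longrightarrow> rho x * U' x t - plap w p (\<lambda>y. u y t) x = 0" using U' by blast
        show "p > 2" by (rule p)
        show "k \<ge> 2" by (rule k)
      qed
      have gg: "S.gam = gam" unfolding S.gam_def gam_def ..
      have ks': "k * s = S.gam * ps" using ks gg by simp
      have fin: "u x t0 \<le> ((CS * (4 * (4 * (c1 / 2 * (\<alpha> - 1) * (t0 / 2) / 2) powr (- 1 / (\<alpha> - 1)) / t0) / c0) powr (1 / p)) powr ps / cm) powr (1 / (gam * ps))"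
        using S.final[OF sob CS ps e1 s1 es ks' Ab A0 t0 T(2), of x]
        unfolding gg c1_def c0_def \<alpha>_def by simp
      have gam0: "gam > 0" unfolding gam_def using p k by simp
      have gp: "gam * p = k + p - 2" unfolding gam_def using p by simp
      have \<alpha>1: "\<alpha> > 1" unfolding \<alpha>_def using gp k p by simp
      have c00: "c0 > 0" unfolding c0_def using k gam0 by simp
      have c10: "c1 > 0" unfolding c1_def using k gam0 A0 CS by simp
      have sc: "((CS * (4 * (4 * (c1 / 2 * (\<alpha> - 1) * (t0 / 2) / 2) powr (- 1 / (\<alpha> - 1)) / t0) / c0) powr (1 / p)) powr ps / cm) powr (1 / (gam * ps))
         = C * t0 powr ((- 1 / (\<alpha> - 1) - 1) / (gam * p))"
        unfolding C_def by (rule scale_aux[OF CS c00 cm c10 \<alpha>1 p ps gam0 t0])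
      have ex: "(- 1 / (\<alpha> - 1) - 1) / (gam * p) = - 1 / (p - 2)"
      proof -
        have am: "\<alpha> - 1 = (p - 2) / k" unfolding \<alpha>_def gp using k by (simp add: field_simps)
        have i: "- 1 / (\<alpha> - 1) = - k / (p - 2)" unfolding am using k p by simp
        have ii: "- k / (p - 2) - 1 = - (k + p - 2) / (p - 2)" using p by (simp add: field_simps)
        have iii: "- (k + p - 2) / (p - 2) / (k + p - 2) = - 1 / (p - 2)"
        proof -
          have a: "k + p - 2 \<noteq> 0" "p - 2 \<noteq> 0" using p k by simp_all
          thus ?thesis using neg_div_cancel[of "k + p - 2" "p - 2"] by simp
        qed
        show ?thesis unfolding gp i ii using iii by simp
      qed
      have u0x: "u x t0 \<ge> 0" using unn t0 by simp
      have "u x t0 \<le> C * t0 powr (- 1 / (p - 2))" using fin unfolding sc ex .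
      thus "\<bar>u x t0\<bar> \<le> C * t0 powr (- 1 / (p - 2))" using u0x by simp
    qed
  qed simp
qed

end
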